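(* Let $R_1,R_2$ be discrete valuation domains with maximal ideals $P_1=R_1p_1$ and $P_2=R_2p_2$, let $\overline{R}$ be a field and $\mathcal{V}_i:R_i\to\overline{R}$ ($i=1,2$) surjective ring homomorphisms with $\ker\mathcal{V}_i=P_i$, and let $R=\{(r_1,r_2)\in R_1\times R_2:\mathcal{V}_1(r_1)=\mathcal{V}_2(r_2)\}$ be the pullback ring. Then every non-zero indecomposable separated pseudo-absorbing primary multiplication $R$-module is isomorphic to one of the following $R$-modules: (1) $R$; (2) $(R_1/P_1^n\to\overline{R}\leftarrow R_2/P_2^m)$; (3) $(R_1\to\overline{R}\leftarrow R_2/P_2^m)$; (4) $(R_1/P_1^n\to\overline{R}\leftarrow R_2)$; where $m,n\geq 1$ are integers.
   Context: $R$ is a commutative local ring with maximal ideal $P=P_1\oplus P_2=\{(a,b):a\in P_1,b\in P_2\}$. For integers $n,m\ge1$ write $P_1^n\oplus 0=\{(a,0):a\in P_1^n\}$, $0\oplus P_2^m=\{(0,b):b\in P_2^m\}$, $P_1^n\oplus P_2^m=\{(a,b):a\in P_1^n,b\in P_2^m\}$; these are ideals of $R$. For an $R$-module $S$, $P_1S$ means $(P_1\oplus 0)S$ and $P_2S$ means $(0\oplus P_2)S$. An $R$-module $S$ is separated if $P_1S\cap P_2S=0$. For an $R_1$-module $A$ and an $R_2$-module $B$ together with surjections $g:A\to\overline{R}$, $h:B\to\overline{R}$ (here always the natural maps induced by $\mathcal{V}_1$, $\mathcal{V}_2$ on $R_1$, $R_1/P_1^n$, $R_2$, $R_2/P_2^m$),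 the notation $(A\to\overline{R}\leftarrow B)$ denotes the $R$-module $\{(a,b)\in A\oplus B: g(a)=h(b)\}$ with $(r_1,r_2)(a,b)=(r_1a,r_2b)$. A proper ideal $I$ of a commutative ring is 2-absorbing primary if whenever $abc\in I$ then $ab\in I$ or $ac\in\sqrt I$ or $bc\in\sqrt I$. A proper submodule $N$ of an $R$-module $M$ is pseudo-absorbing primary if $(N:_RM)=\{r\in R: rM\subseteq N\}$ is a 2-absorbing primary ideal of $R$. $M$ is a pseudo-absorbing primary multiplication module if for every pseudo-absorbing primary submodule $N$ of $M$ there is an ideal $I$ of $R$ with $N=IM$. *)

theory Defs
  imports "HOL-Algebra.Algebra"
begin

definition dvr :: "('a, 'b) ring_scheme \<Rightarrow> bool" where
  "dvr R \<longleftrightarrow> principal_domain R \<and> (\<exists>!P. maximalideal P R) \<and> \<not> field R"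

definition pb_ring ::
  "('a, 'x) ring_scheme \<Rightarrow> ('b, 'y) ring_scheme \<Rightarrow> ('a \<Rightarrow> 'c) \<Rightarrow> ('b \<Rightarrow> 'c) \<Rightarrow> ('a \<times> 'b) ring" where
  "pb_ring R1 R2 V1 V2 =
    \<lparr>carrier = {(a, b). a \<in> carrier R1 \<and> b \<in> carrier R2 \<and> V1 a = V2 b},
     monoid.mult = (\<lambda>x y. (fst x \<otimes>\<^bsub>R1\<^esub> fst y, snd x \<otimes>\<^bsub>R2\<^esub> snd y)),
     monoid.one = (\<one>\<^bsub>R1\<^esub>, \<one>\<^bsub>R2\<^esub>),
     ring.zero = (\<zero>\<^bsub>R1\<^esub>, \<zero>\<^bsub>R2\<^esub>),
     ring.add = (\<lambda>x y. (fst x \<oplus>\<^bsub>R1\<^esub> fst y, snd x \<oplus>\<^bsub>R2\<^esub> snd y))\<rparr>"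

text \<open>The R-module (R1/I1 \<rightarrow> Rbar \<leftarrow> R2/I2) (for ideals I1 \<subseteq> P1, I2 \<subseteq> P2), realised with
  elements pairs of cosets (X, Y) with V1-image of X equal to V2-image of Y, and
  (r1,r2)(X,Y) = (r1 X, r2 Y). Taking I1 = {0} gives R1 itself (up to the canonical
  isomorphism R1 \<cong> R1/{0}), and similarly for R2.\<close>
definition pb_module ::
  "('a, 'x) ring_scheme \<Rightarrow> ('b, 'y) ring_scheme \<Rightarrow> ('a \<Rightarrow> 'c) \<Rightarrow> ('b \<Rightarrow> 'c) \<Rightarrow> 'a set \<Rightarrow> 'b set
     \<Rightarrow> ('a \<times> 'b, 'a set \<times> 'b set) module" where
  "pb_module R1 R2 V1 V2 I1 I2 =
    \<lparr>carrier = {(I1 +>\<^bsub>R1\<^esub> a, I2 +>\<^bsub>R2\<^esub> b) | a b.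
                  a \<in> carrier R1 \<and> b \<in> carrier R2 \<and> V1 a = V2 b},
     monoid.mult = (\<lambda>A B. (rcoset_mult R1 I1 (fst A) (fst B), rcoset_mult R2 I2 (snd A) (snd B))),
     monoid.one = (I1 +>\<^bsub>R1\<^esub> \<one>\<^bsub>R1\<^esub>, I2 +>\<^bsub>R2\<^esub> \<one>\<^bsub>R2\<^esub>),
     ring.zero = (I1, I2),
     ring.add = (\<lambda>A B. (fst A <+>\<^bsub>R1\<^esub> fst B, snd A <+>\<^bsub>R2\<^esub> snd B)),
     module.smult = (\<lambda>r A. (rcoset_mult R1 I1 (I1 +>\<^bsub>R1\<^esub> fst r) (fst A),
                     rcoset_mult R2 I2 (I2 +>\<^bsub>R2\<^esub> snd r) (snd A)))\<rparr>"

definition mod_iso ::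
  "('r, 'x) ring_scheme \<Rightarrow> ('r, 'm, 'u) module_scheme \<Rightarrow> ('r, 'n, 'v) module_scheme \<Rightarrow> bool" where
  "mod_iso R M N \<longleftrightarrow> (\<exists>f. bij_betw f (carrier M) (carrier N) \<and>
      (\<forall>x\<in>carrier M. \<forall>y\<in>carrier M. f (x \<oplus>\<^bsub>M\<^esub> y) = f x \<oplus>\<^bsub>N\<^esub> f y) \<and>
      (\<forall>r\<in>carrier R. \<forall>x\<in>carrier M. f (r \<odot>\<^bsub>M\<^esub> x) = r \<odot>\<^bsub>N\<^esub> f x))"

definition ideal_smod ::
  "('r, 'x) ring_scheme \<Rightarrow> ('r, 'm, 'u) module_scheme \<Rightarrow> 'r set \<Rightarrow> 'm set" where
  "ideal_smod R M I = \<Inter>{N. submodule N R M \<and> (\<forall>r\<in>I. \<forall>x\<in>carrier M. r \<odot>\<^bsub>M\<^esub> x \<in> N)}"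

definition mod_colon ::
  "('r, 'x) ring_scheme \<Rightarrow> ('r, 'm, 'u) module_scheme \<Rightarrow> 'm set \<Rightarrow> 'r set" where
  "mod_colon R M N = {r \<in> carrier R. \<forall>x\<in>carrier M. r \<odot>\<^bsub>M\<^esub> x \<in> N}"

definition ideal_radical :: "('r, 'x) ring_scheme \<Rightarrow> 'r set \<Rightarrow> 'r set" where
  "ideal_radical R I = {x \<in> carrier R. \<exists>n::nat. x [^]\<^bsub>R\<^esub> n \<in> I}"

definition two_absorbing_primary :: "('r, 'x) ring_scheme \<Rightarrow> 'r set \<Rightarrow> bool" where
  "two_absorbing_primary R I \<longleftrightarrow> ideal I R \<and> I \<noteq> carrier R \<and>
     (\<forall>a\<in>carrier R. \<forall>b\<in>carrier R. \<forall>c\<in>carrier R.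
        a \<otimes>\<^bsub>R\<^esub> b \<otimes>\<^bsub>R\<^esub> c \<in> I \<longrightarrow>
        a \<otimes>\<^bsub>R\<^esub> b \<in> I \<or> a \<otimes>\<^bsub>R\<^esub> c \<in> ideal_radical R I \<or> b \<otimes>\<^bsub>R\<^esub> c \<in> ideal_radical R I)"

definition pseudo_absorbing_primary ::
  "('r, 'x) ring_scheme \<Rightarrow> ('r, 'm, 'u) module_scheme \<Rightarrow> 'm set \<Rightarrow> bool" where
  "pseudo_absorbing_primary R M N \<longleftrightarrow> submodule N R M \<and> N \<noteq> carrier M \<and>
     two_absorbing_primary R (mod_colon R M N)"

definition pap_multiplication_module ::
  "('r, 'x) ring_scheme \<Rightarrow> ('r, 'm, 'u) module_scheme \<Rightarrow> bool" where
  "pap_multiplication_module R M \<longleftrightarrow>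
     (\<forall>N. pseudo_absorbing_primary R M N \<longrightarrow> (\<exists>I. ideal I R \<and> N = ideal_smod R M I))"

definition indecomposable ::
  "('r, 'x) ring_scheme \<Rightarrow> ('r, 'm, 'u) module_scheme \<Rightarrow> bool" where
  "indecomposable R M \<longleftrightarrow> carrier M \<noteq> {\<zero>\<^bsub>M\<^esub>} \<and>
     (\<forall>N1 N2. submodule N1 R M \<and> submodule N2 R M \<and> N1 \<inter> N2 = {\<zero>\<^bsub>M\<^esub>} \<and>
        N1 <+>\<^bsub>M\<^esub> N2 = carrier M \<longrightarrow> N1 = {\<zero>\<^bsub>M\<^esub>} \<or> N2 = {\<zero>\<^bsub>M\<^esub>})"

definition separated ::
  "('a, 'x) ring_scheme \<Rightarrow> ('b, 'y) ring_scheme \<Rightarrow> 'a set \<Rightarrow> 'b set \<Rightarrow>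
   ('a \<times> 'b, 'z) ring_scheme \<Rightarrow> ('a \<times> 'b, 'm, 'u) module_scheme \<Rightarrow> bool" where
  "separated R1 R2 P1 P2 R M \<longleftrightarrow>
     ideal_smod R M {(a, \<zero>\<^bsub>R2\<^esub>) | a. a \<in> P1} \<inter> ideal_smod R M {(\<zero>\<^bsub>R1\<^esub>, b) | b. b \<in> P2}
       = {\<zero>\<^bsub>M\<^esub>}"

end

theory Submission
  imports Defs
begin

lemma (in principal_domain) dvr_nonunit_in_P:
  assumes uniq: "\<exists>!P. maximalideal P R" and pmax: "maximalideal (PIdl p) R" and p: "p \<in> carrier R"
    and x: "x \<in> carrier R" "x \<notin> Units R"
  shows "x \<in> PIdl p"
proof (cases "x = \<zero>")
  case True
  then show ?thesis using p unfolding cgenideal_def by (auto intro!: exI[of _ \<zero>])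
next
  case False
  then obtain b where b: "b \<in> carrier R" "ring_irreducible b" "b divides x"
    using exists_irreducible_divisor[of x] x by blast
  have "maximalideal (PIdl b) R" using irreducible_imp_maximalideal b by blast
  hence "PIdl b = PIdl p" using uniq pmax by blast
  moreover have "x \<in> PIdl b" using b(3) x(1) b(1)
    unfolding factor_def cgenideal_def by (auto simp: m_comm)
  ultimately show ?thesis by simp
qed

lemma (in principal_domain) dvr_p_nonunit:
  assumes pmax: "maximalideal (PIdl p) R" and p: "p \<in> carrier R"
  shows "p \<notin> Units R"
  using maximalideal.I_notcarr[OF pmax] ideal_eq_carrier_iff[OF p] by auto

lemma (in principal_domain) dvr_factor:
  assumes uniq: "\<exists>!P. maximalideal P R" and pmax: "maximalideal (PIdl p) R" and p: "p \<in> carrier R"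
    and x: "x \<in> carrier R" "x \<noteq> \<zero>"
  shows "\<exists>k w. w \<in> Units R \<and> x = w \<otimes> p [^] (k::nat)"
proof (cases "x \<in> Units R")
  case True
  then show ?thesis by (intro exI[of _ 0] exI[of _ x]) auto
next
  case False
  have pnu: "p \<notin> Units R" using dvr_p_nonunit pmax p .
  obtain fs where fs: "set fs \<subseteq> carrier (mult_of R)" "wfactors (mult_of R) fs x"
    using factorization_property[of x] x False by blast
  have key: "\<And>fs. set fs \<subseteq> carrier (mult_of R) \<Longrightarrow> (\<forall>f\<in>set fs. irreducible (mult_of R) f) \<Longrightarrow>
     \<exists>w\<in>Units R. foldr (\<otimes>) fs \<one> = w \<otimes> p [^] length fs"
  proof -
    fix fs :: "'a list"
    show "set fs \<subseteq> carrier (mult_of R) \<Longrightarrow> (\<forall>f\<in>set fs. irreducible (mult_of R) f) \<Longrightarrow>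
     \<exists>w\<in>Units R. foldr (\<otimes>) fs \<one> = w \<otimes> p [^] length fs"
    proof (induction fs)
      case Nil
      then show ?case by (intro bexI[of _ \<one>]) auto
    next
      case (Cons f fs)
      then obtain w where w: "w \<in> Units R" "foldr (\<otimes>) fs \<one> = w \<otimes> p [^] length fs" by auto
      have f: "f \<in> carrier R" "f \<noteq> \<zero>" "irreducible (mult_of R) f" using Cons.prems by auto
      have fri: "ring_irreducible f" using ring_irreducibleI'[of f] f by auto
      have "f \<notin> Units R" using ring_irreducibleE(4)[OF f(1) fri] .
      hence "f \<in> PIdl p" using dvr_nonunit_in_P[OF uniq pmax p f(1)] by simp
      then obtain c where c: "c \<in> carrier R" "f = c \<otimes> p" unfolding cgenideal_def by auto
      have "c \<in> Units R" using ring_irreducibleE(5)[OF f(1) fri c(1) p c(2)] pnu by auto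
      have "foldr (\<otimes>) (f # fs) \<one> = (c \<otimes> p) \<otimes> (w \<otimes> p [^] length fs)" using c w by simp
      also have "\<dots> = (c \<otimes> w) \<otimes> p [^] length (f # fs)"
        using c w p by (simp add: m_ac nat_pow_Suc2 Units_closed) 
      finally show ?case using \<open>c \<in> Units R\<close> w(1) by blast
    qed
  qed
  obtain w where w: "w \<in> Units R" "foldr (\<otimes>) fs \<one> = w \<otimes> p [^] length fs"
    using key[OF fs(1)] fs(2) unfolding wfactors_def by auto
  have wc: "w \<otimes> p [^] length fs \<in> carrier R" using w p by auto
  have "foldr (\<otimes>) fs \<one> \<sim>\<^bsub>mult_of R\<^esub> x" using fs(2) unfolding wfactors_def by simp
  hence "x \<sim>\<^bsub>mult_of R\<^esub> w \<otimes> p [^] length fs" using w(2) by (simp add: mult_of.associated_sym)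
  hence "x \<sim> w \<otimes> p [^] length fs" using assoc_iff_assoc_mult[OF x(1) wc] by simp
  then obtain u where u: "u \<in> Units R" "x = u \<otimes> (w \<otimes> p [^] length fs)"
    using ring_associated_iff[OF x(1) wc] by auto
  hence "x = (u \<otimes> w) \<otimes> p [^] length fs" using w p by (simp add: m_assoc Units_closed)
  thus ?thesis using u w by blast
qed

context module
begin

lemma smult_image_submodule:
  assumes a: "a \<in> carrier R"
  shows "submodule ((\<lambda>x. a \<odot>\<^bsub>M\<^esub> x) ` carrier M) R M"
proof (rule submoduleI)
  show "(\<lambda>x. a \<odot>\<^bsub>M\<^esub> x) ` carrier M \<subseteq> carrier M" using a by auto
  show "\<zero>\<^bsub>M\<^esub> \<in> (\<lambda>x. a \<odot>\<^bsub>M\<^esub> x) ` carrier M"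
    using a by (intro image_eqI[of _ _ "\<zero>\<^bsub>M\<^esub>"]) auto
  fix y assume "y \<in> (\<lambda>x. a \<odot>\<^bsub>M\<^esub> x) ` carrier M"
  then obtain x where x: "x \<in> carrier M" "y = a \<odot>\<^bsub>M\<^esub> x" by auto
  show "\<ominus>\<^bsub>M\<^esub> y \<in> (\<lambda>x. a \<odot>\<^bsub>M\<^esub> x) ` carrier M"
    using x a by (intro image_eqI[of _ _ "\<ominus>\<^bsub>M\<^esub> x"]) (auto simp: smult_r_minus)
next
  fix y z assume "y \<in> (\<lambda>x. a \<odot>\<^bsub>M\<^esub> x) ` carrier M" "z \<in> (\<lambda>x. a \<odot>\<^bsub>M\<^esub> x) ` carrier M"
  then obtain x w where x: "x \<in> carrier M" "y = a \<odot>\<^bsub>M\<^esub> x" "w \<in> carrier M" "z = a \<odot>\<^bsub>M\<^esub> w" by auto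
  show "y \<oplus>\<^bsub>M\<^esub> z \<in> (\<lambda>x. a \<odot>\<^bsub>M\<^esub> x) ` carrier M"
    using x a by (intro image_eqI[of _ _ "x \<oplus>\<^bsub>M\<^esub> w"]) (auto simp: smult_r_distr)
next
  fix b y assume b: "b \<in> carrier R" and "y \<in> (\<lambda>x. a \<odot>\<^bsub>M\<^esub> x) ` carrier M"
  then obtain x where x: "x \<in> carrier M" "y = a \<odot>\<^bsub>M\<^esub> x" by auto
  have "b \<odot>\<^bsub>M\<^esub> y = a \<odot>\<^bsub>M\<^esub> (b \<odot>\<^bsub>M\<^esub> x)"
    using x a b by (simp add: smult_assoc1[symmetric] m_comm)
  thus "b \<odot>\<^bsub>M\<^esub> y \<in> (\<lambda>x. a \<odot>\<^bsub>M\<^esub> x) ` carrier M" using x b by auto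
qed

lemma cyclic_submodule:
  assumes x: "x \<in> carrier M"
  shows "submodule ((\<lambda>r. r \<odot>\<^bsub>M\<^esub> x) ` carrier R) R M"
proof (rule submoduleI)
  show "(\<lambda>r. r \<odot>\<^bsub>M\<^esub> x) ` carrier R \<subseteq> carrier M" using x by auto
  show "\<zero>\<^bsub>M\<^esub> \<in> (\<lambda>r. r \<odot>\<^bsub>M\<^esub> x) ` carrier R"
    using x by (intro image_eqI[of _ _ "\<zero>"]) auto
  fix y assume "y \<in> (\<lambda>r. r \<odot>\<^bsub>M\<^esub> x) ` carrier R"
  then obtain r where r: "r \<in> carrier R" "y = r \<odot>\<^bsub>M\<^esub> x" by auto
  show "\<ominus>\<^bsub>M\<^esub> y \<in> (\<lambda>r. r \<odot>\<^bsub>M\<^esub> x) ` carrier R"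
    using x r by (intro image_eqI[of _ _ "\<ominus> r"]) (auto simp: smult_l_minus)
next
  fix y z assume "y \<in> (\<lambda>r. r \<odot>\<^bsub>M\<^esub> x) ` carrier R" "z \<in> (\<lambda>r. r \<odot>\<^bsub>M\<^esub> x) ` carrier R"
  then obtain r s where r: "r \<in> carrier R" "y = r \<odot>\<^bsub>M\<^esub> x" "s \<in> carrier R" "z = s \<odot>\<^bsub>M\<^esub> x" by auto
  show "y \<oplus>\<^bsub>M\<^esub> z \<in> (\<lambda>r. r \<odot>\<^bsub>M\<^esub> x) ` carrier R"
    using x r by (intro image_eqI[of _ _ "r \<oplus> s"]) (auto simp: smult_l_distr)
next
  fix b y assume b: "b \<in> carrier R" and "y \<in> (\<lambda>r. r \<odot>\<^bsub>M\<^esub> x) ` carrier R"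
  then obtain r where r: "r \<in> carrier R" "y = r \<odot>\<^bsub>M\<^esub> x" by auto
  show "b \<odot>\<^bsub>M\<^esub> y \<in> (\<lambda>r. r \<odot>\<^bsub>M\<^esub> x) ` carrier R"
    using x r b by (intro image_eqI[of _ _ "b \<otimes> r"]) (auto simp: smult_assoc1)
qed

lemma sum_submodule:
  assumes A: "submodule A R M" and B: "submodule B R M"
  shows "submodule (A <+>\<^bsub>M\<^esub> B) R M"
proof -
  note AE = submoduleE[OF A] and BE = submoduleE[OF B]
  have mem: "z \<in> A <+>\<^bsub>M\<^esub> B \<longleftrightarrow> (\<exists>a\<in>A. \<exists>b\<in>B. z = a \<oplus>\<^bsub>M\<^esub> b)" for z
    unfolding set_add_def' by auto
  show ?thesis
  proof (rule submoduleI)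
    show "A <+>\<^bsub>M\<^esub> B \<subseteq> carrier M" using AE(1) BE(1) by (auto simp: mem intro!: M.a_closed)
    show "\<zero>\<^bsub>M\<^esub> \<in> A <+>\<^bsub>M\<^esub> B"
      using submodule.axioms(1)[OF A] submodule.axioms(1)[OF B]
      unfolding mem by (metis additive_subgroup.zero_closed additive_subgroup_def l_zero zero_closed)
  next
    fix z assume "z \<in> A <+>\<^bsub>M\<^esub> B"
    then obtain a b where ab: "a \<in> A" "b \<in> B" "z = a \<oplus>\<^bsub>M\<^esub> b" by (auto simp: mem)
    have "\<ominus>\<^bsub>M\<^esub> z = (\<ominus>\<^bsub>M\<^esub> a) \<oplus>\<^bsub>M\<^esub> (\<ominus>\<^bsub>M\<^esub> b)"
      using ab AE(1) BE(1) M.minus_add[of a b] by auto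
    thus "\<ominus>\<^bsub>M\<^esub> z \<in> A <+>\<^bsub>M\<^esub> B" using ab AE(3) BE(3) by (auto simp: mem)
  next
    fix z w assume "z \<in> A <+>\<^bsub>M\<^esub> B" "w \<in> A <+>\<^bsub>M\<^esub> B"
    then obtain a b a' b' where ab: "a \<in> A" "b \<in> B" "z = a \<oplus>\<^bsub>M\<^esub> b"
      "a' \<in> A" "b' \<in> B" "w = a' \<oplus>\<^bsub>M\<^esub> b'" by (auto simp: mem)
    have "z \<oplus>\<^bsub>M\<^esub> w = (a \<oplus>\<^bsub>M\<^esub> a') \<oplus>\<^bsub>M\<^esub> (b \<oplus>\<^bsub>M\<^esub> b')"
    proof -
      have c: "a \<in> carrier M" "b \<in> carrier M" "a' \<in> carrier M" "b' \<in> carrier M"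
        using ab AE(1) BE(1) by auto
      show ?thesis unfolding ab(3,6) using c by (simp add: M.a_ac)
    qed
    thus "z \<oplus>\<^bsub>M\<^esub> w \<in> A <+>\<^bsub>M\<^esub> B" using ab AE(5) BE(5) unfolding mem by blast
  next
    fix r z assume r: "r \<in> carrier R" and "z \<in> A <+>\<^bsub>M\<^esub> B"
    then obtain a b where ab: "a \<in> A" "b \<in> B" "z = a \<oplus>\<^bsub>M\<^esub> b" by (auto simp: mem)
    have "r \<odot>\<^bsub>M\<^esub> z = r \<odot>\<^bsub>M\<^esub> a \<oplus>\<^bsub>M\<^esub> r \<odot>\<^bsub>M\<^esub> b"
      unfolding ab(3) using ab AE(1) BE(1) r by (intro smult_r_distr) auto
    thus "r \<odot>\<^bsub>M\<^esub> z \<in> A <+>\<^bsub>M\<^esub> B" using ab AE(4) BE(4) r unfolding mem by blast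
  qed
qed

lemma colon_ideal:
  assumes N: "submodule N R M"
  shows "ideal (mod_colon R M N) R"
proof -
  note NE = submoduleE[OF N]
  show ?thesis
  proof (rule idealI)
    show "ring R" by (rule ring_axioms)
    have z: "\<zero>\<^bsub>M\<^esub> \<in> N"
      using NE(2) NE(1) NE(3) NE(5) by (metis M.l_neg ex_in_conv subsetD)
    show "subgroup (mod_colon R M N) (add_monoid R)"
      unfolding subgroup_def using NE z
      by (auto simp: mod_colon_def a_inv_def[symmetric] smult_l_distr smult_l_minus)
  next
    fix a x assume "a \<in> mod_colon R M N" "x \<in> carrier R"
    thus "x \<otimes> a \<in> mod_colon R M N"
      unfolding mod_colon_def using NE(4) by (auto simp: smult_assoc1)
  next
    fix a x assume "a \<in> mod_colon R M N" "x \<in> carrier R"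
    thus "a \<otimes> x \<in> mod_colon R M N"
      unfolding mod_colon_def using NE(4) by (auto simp: smult_assoc1 m_comm)
  qed
qed

lemma smod_sub_colon:
  assumes "I \<subseteq> carrier R"
  shows "I \<subseteq> mod_colon R M (ideal_smod R M I)"
  using assms unfolding mod_colon_def ideal_smod_def by auto

lemma smod_le:
  assumes "submodule K R M" "\<And>r x. r \<in> I \<Longrightarrow> x \<in> carrier M \<Longrightarrow> r \<odot>\<^bsub>M\<^esub> x \<in> K"
  shows "ideal_smod R M I \<subseteq> K"
  using assms unfolding ideal_smod_def by auto

lemma two_abs_of_prime3:
  assumes "ideal I R" "I \<noteq> carrier R"
    and "\<And>a b c. a \<in> carrier R \<Longrightarrow> b \<in> carrier R \<Longrightarrow> c \<in> carrier R \<Longrightarrow>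
          a \<otimes> b \<otimes> c \<in> I \<Longrightarrow> a \<otimes> b \<in> I \<or> a \<otimes> c \<in> I \<or> b \<otimes> c \<in> I"
  shows "two_absorbing_primary R I"
proof -
  have rad: "x \<in> I \<Longrightarrow> x \<in> ideal_radical R I" for x
    using ideal.Icarr[OF assms(1)] unfolding ideal_radical_def
    by (auto intro!: exI[of _ "Suc 0"])
  show ?thesis unfolding two_absorbing_primary_def using assms rad by blast
qed

end


locale side = module +
  fixes u v :: 'a and f :: "'a \<Rightarrow> 'zz" and z0 :: 'zz
  assumes u: "u \<in> carrier R" and v: "v \<in> carrier R" and uv: "u \<otimes> v = \<zero>"
    and hA: "\<And>r. r \<in> carrier R \<Longrightarrow> f r = z0 \<Longrightarrow> \<exists>s\<in>carrier R. r = s \<otimes> v"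
    and hB: "\<And>r. r \<in> carrier R \<Longrightarrow> f r \<noteq> z0 \<Longrightarrow>
        r \<in> Units R \<or> (\<exists>t\<in>carrier R. \<exists>k::nat. \<exists>s\<in>carrier R. t \<otimes> r = u [^] k \<oplus> s \<otimes> v)"
    and hone: "f \<one> \<noteq> z0"
    and hprime: "\<And>a b c. a \<in> carrier R \<Longrightarrow> b \<in> carrier R \<Longrightarrow> c \<in> carrier R \<Longrightarrow>
        f (a \<otimes> b \<otimes> c) = z0 \<Longrightarrow> f (a \<otimes> b) = z0 \<or> f (a \<otimes> c) = z0 \<or> f (b \<otimes> c) = z0"
    and hD: "\<And>r. r \<in> carrier R \<Longrightarrow> \<one> \<ominus> u \<otimes> r \<in> Units R"
    and hpap: "pap_multiplication_module R M"
begin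

abbreviation "vS \<equiv> (\<lambda>x. v \<odot>\<^bsub>M\<^esub> x) ` carrier M"
abbreviation "uS \<equiv> (\<lambda>x. u \<odot>\<^bsub>M\<^esub> x) ` carrier M"

lemma iter:
  assumes N: "submodule N R M"
    and H: "\<forall>y\<in>carrier M. \<exists>n\<in>N. \<exists>w\<in>carrier M. y = n \<oplus>\<^bsub>M\<^esub> u \<odot>\<^bsub>M\<^esub> w"
  shows "\<forall>y\<in>carrier M. \<exists>n\<in>N. \<exists>w\<in>carrier M. y = n \<oplus>\<^bsub>M\<^esub> (u [^] (j::nat)) \<odot>\<^bsub>M\<^esub> w"
proof (induction j)
  case 0
  note NE = submoduleE[OF N]
  have z: "\<zero>\<^bsub>M\<^esub> \<in> N"
    using NE(2) NE(1) NE(3) NE(5) by (metis M.l_neg ex_in_conv subsetD)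
  show ?case
  proof
    fix y assume y: "y \<in> carrier M"
    have "y = \<zero>\<^bsub>M\<^esub> \<oplus>\<^bsub>M\<^esub> (u [^] (0::nat)) \<odot>\<^bsub>M\<^esub> y" using y by simp
    thus "\<exists>n\<in>N. \<exists>w\<in>carrier M. y = n \<oplus>\<^bsub>M\<^esub> (u [^] (0::nat)) \<odot>\<^bsub>M\<^esub> w" using z y by blast
  qed
next
  case (Suc j)
  note NE = submoduleE[OF N]
  show ?case
  proof
    fix y assume y: "y \<in> carrier M"
    then obtain n w where nw: "n \<in> N" "w \<in> carrier M" "y = n \<oplus>\<^bsub>M\<^esub> (u [^] j) \<odot>\<^bsub>M\<^esub> w"
      using Suc.IH by blast
    obtain n' w' where nw': "n' \<in> N" "w' \<in> carrier M" "w = n' \<oplus>\<^bsub>M\<^esub> u \<odot>\<^bsub>M\<^esub> w'"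
      using H nw(2) by blast
    have c: "n \<in> carrier M" "n' \<in> carrier M" using nw nw' NE(1) by auto
    have uj: "u [^] j \<in> carrier R" using u by auto
    have "(u [^] j) \<odot>\<^bsub>M\<^esub> w = (u [^] j) \<odot>\<^bsub>M\<^esub> n' \<oplus>\<^bsub>M\<^esub> (u [^] Suc j) \<odot>\<^bsub>M\<^esub> w'"
      using nw' c uj u by (simp add: smult_r_distr smult_assoc1)
    hence "y = (n \<oplus>\<^bsub>M\<^esub> (u [^] j) \<odot>\<^bsub>M\<^esub> n') \<oplus>\<^bsub>M\<^esub> (u [^] Suc j) \<odot>\<^bsub>M\<^esub> w'"
      using nw c uj u nw' by (simp add: M.a_assoc)
    moreover have "n \<oplus>\<^bsub>M\<^esub> (u [^] j) \<odot>\<^bsub>M\<^esub> n' \<in> N" using NE(4,5) nw nw' uj by auto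
    ultimately show "\<exists>n\<in>N. \<exists>w\<in>carrier M. y = n \<oplus>\<^bsub>M\<^esub> u [^] Suc j \<odot>\<^bsub>M\<^esub> w"
      using nw' by blast
  qed
qed

lemma C0_acts:
  assumes r: "r \<in> carrier R" "f r = z0" and y: "y \<in> carrier M"
  shows "r \<odot>\<^bsub>M\<^esub> y \<in> vS"
proof -
  obtain s where s: "s \<in> carrier R" "r = s \<otimes> v" using hA r by blast
  have "r \<odot>\<^bsub>M\<^esub> y = v \<odot>\<^bsub>M\<^esub> (s \<odot>\<^bsub>M\<^esub> y)" using s v y by (simp add: smult_assoc1[symmetric] m_comm)
  thus ?thesis using s y by auto
qed

lemma colon_eq:
  assumes N: "submodule N R M" and Nne: "N \<noteq> carrier M" and vN: "vS \<subseteq> N"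
    and H: "\<forall>y\<in>carrier M. \<exists>n\<in>N. \<exists>w\<in>carrier M. y = n \<oplus>\<^bsub>M\<^esub> u \<odot>\<^bsub>M\<^esub> w"
  shows "mod_colon R M N = {r \<in> carrier R. f r = z0}"
proof
  note NE = submoduleE[OF N]
  show "{r \<in> carrier R. f r = z0} \<subseteq> mod_colon R M N"
    using C0_acts vN unfolding mod_colon_def by blast
  show "mod_colon R M N \<subseteq> {r \<in> carrier R. f r = z0}"
  proof
    fix r assume r: "r \<in> mod_colon R M N"
    hence rc: "r \<in> carrier R" and rN: "\<And>y. y \<in> carrier M \<Longrightarrow> r \<odot>\<^bsub>M\<^esub> y \<in> N"
      unfolding mod_colon_def by auto
    have False if fr: "f r \<noteq> z0"
    proof -
      have "carrier M \<subseteq> N"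
      proof (cases "r \<in> Units R")
        case True
        show ?thesis
        proof
          fix y assume y: "y \<in> carrier M"
          have "y = inv r \<odot>\<^bsub>M\<^esub> (r \<odot>\<^bsub>M\<^esub> y)"
            using True y by (simp add: smult_assoc1[symmetric] Units_l_inv Units_closed Units_inv_closed)
          moreover have "inv r \<odot>\<^bsub>M\<^esub> (r \<odot>\<^bsub>M\<^esub> y) \<in> N"
            using NE(4)[OF Units_inv_closed[OF True] rN[OF y]] .
          ultimately show "y \<in> N" by simp
        qed
      next
        case False
        then obtain t k s where tks: "t \<in> carrier R" "s \<in> carrier R" "t \<otimes> r = u [^] (k::nat) \<oplus> s \<otimes> v"
          using hB[OF rc fr] by blast
        have ukN: "(u [^] k) \<odot>\<^bsub>M\<^esub> y \<in> N" if y: "y \<in> carrier M" for y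
        proof -
          have e: "(t \<otimes> r) \<odot>\<^bsub>M\<^esub> y = (u [^] k) \<odot>\<^bsub>M\<^esub> y \<oplus>\<^bsub>M\<^esub> (s \<otimes> v) \<odot>\<^bsub>M\<^esub> y"
            using tks y u v rc by (simp add: smult_l_distr)
          have a: "(t \<otimes> r) \<odot>\<^bsub>M\<^esub> y \<in> N"
            using smult_assoc1[OF tks(1) rc y] NE(4)[OF tks(1) rN[OF y]] by simp
          have b: "(s \<otimes> v) \<odot>\<^bsub>M\<^esub> y \<in> N"
            using C0_acts vN y tks v hA by (metis (no_types, lifting) m_closed smult_assoc1 m_comm smult_closed image_eqI subsetD)
          have "(u [^] k) \<odot>\<^bsub>M\<^esub> y = (t \<otimes> r) \<odot>\<^bsub>M\<^esub> y \<oplus>\<^bsub>M\<^esub> \<ominus>\<^bsub>M\<^esub> ((s \<otimes> v) \<odot>\<^bsub>M\<^esub> y)"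
            using e tks y u v rc by (simp add: M.a_assoc M.r_neg)
          thus ?thesis using a b NE(3) NE(5) by auto
        qed
        show ?thesis
        proof
          fix y assume y: "y \<in> carrier M"
          obtain n w where "n \<in> N" "w \<in> carrier M" "y = n \<oplus>\<^bsub>M\<^esub> (u [^] k) \<odot>\<^bsub>M\<^esub> w"
            using iter[OF N H] y by blast
          thus "y \<in> N" using ukN NE(5) by auto
        qed
      qed
      thus False using Nne NE(1) by auto
    qed
    thus "r \<in> {r \<in> carrier R. f r = z0}" using rc by auto
  qed
qed

lemma C0_two_abs:
  assumes N: "submodule N R M" and e: "mod_colon R M N = {r \<in> carrier R. f r = z0}"
  shows "two_absorbing_primary R (mod_colon R M N)"
proof (rule two_abs_of_prime3)
  show "ideal (mod_colon R M N) R" using colon_ideal[OF N] .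
  show "mod_colon R M N \<noteq> carrier R" using e hone by auto
  fix a b c assume "a \<in> carrier R" "b \<in> carrier R" "c \<in> carrier R" "a \<otimes> b \<otimes> c \<in> mod_colon R M N"
  thus "a \<otimes> b \<in> mod_colon R M N \<or> a \<otimes> c \<in> mod_colon R M N \<or> b \<otimes> c \<in> mod_colon R M N"
    unfolding e using hprime by auto
qed

lemma sub_vS:
  assumes N: "submodule N R M" and Nne: "N \<noteq> carrier M" and vN: "vS \<subseteq> N"
    and H: "\<forall>y\<in>carrier M. \<exists>n\<in>N. \<exists>w\<in>carrier M. y = n \<oplus>\<^bsub>M\<^esub> u \<odot>\<^bsub>M\<^esub> w"
  shows "N \<subseteq> vS"
proof -
  have e: "mod_colon R M N = {r \<in> carrier R. f r = z0}" using colon_eq[OF N Nne vN H] .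
  have "pseudo_absorbing_primary R M N"
    unfolding pseudo_absorbing_primary_def using N Nne C0_two_abs[OF N e] by auto
  then obtain I where I: "ideal I R" "N = ideal_smod R M I"
    using hpap unfolding pap_multiplication_module_def by blast
  have "I \<subseteq> mod_colon R M N" using smod_sub_colon[of I] ideal.Icarr[OF I(1)] I(2) by auto
  hence "I \<subseteq> {r \<in> carrier R. f r = z0}" using e by simp
  hence "ideal_smod R M I \<subseteq> vS"
    using smod_le[OF smult_image_submodule[OF v], of I] C0_acts by blast
  thus ?thesis using I(2) by simp
qed


lemma nak:
  assumes vz: "vS = {\<zero>\<^bsub>M\<^esub>}" and Su: "carrier M \<subseteq> uS" and nz: "carrier M \<noteq> {\<zero>\<^bsub>M\<^esub>}"
  shows False
proof -
  obtain x where x: "x \<in> carrier M" "x \<noteq> \<zero>\<^bsub>M\<^esub>" using nz M.zero_closed by blast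
  let ?N = "(\<lambda>r. r \<odot>\<^bsub>M\<^esub> x) ` carrier R"
  have N: "submodule ?N R M" using cyclic_submodule[OF x(1)] .
  have xN: "x \<in> ?N" using x by (intro image_eqI[of _ _ \<one>]) auto
  have "?N = carrier M"
  proof (rule ccontr)
    assume ne: "?N \<noteq> carrier M"
    have "\<zero>\<^bsub>M\<^esub> \<in> ?N" using x by (intro image_eqI[of _ _ \<zero>]) auto
    hence vN: "vS \<subseteq> ?N" using vz by simp
    have H: "\<forall>y\<in>carrier M. \<exists>n\<in>?N. \<exists>w\<in>carrier M. y = n \<oplus>\<^bsub>M\<^esub> u \<odot>\<^bsub>M\<^esub> w"
    proof
      fix y assume y: "y \<in> carrier M"
      then obtain w where w: "w \<in> carrier M" "y = u \<odot>\<^bsub>M\<^esub> w" using Su by auto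
      have "y = (\<zero> \<odot>\<^bsub>M\<^esub> x) \<oplus>\<^bsub>M\<^esub> u \<odot>\<^bsub>M\<^esub> w" using w x u by simp
      thus "\<exists>n\<in>?N. \<exists>w\<in>carrier M. y = n \<oplus>\<^bsub>M\<^esub> u \<odot>\<^bsub>M\<^esub> w" using w by blast
    qed
    have "?N \<subseteq> vS" using sub_vS[OF N ne vN H] .
    thus False using xN x vz by auto
  qed
  hence "x \<in> uS" using Su x by auto
  then obtain y where y: "y \<in> carrier M" "x = u \<odot>\<^bsub>M\<^esub> y" by auto
  then obtain r where r: "r \<in> carrier R" "y = r \<odot>\<^bsub>M\<^esub> x" using \<open>?N = carrier M\<close> by blast
  have ur: "u \<otimes> r \<in> carrier R" using u r by auto
  have "(u \<otimes> r) \<odot>\<^bsub>M\<^esub> x = u \<odot>\<^bsub>M\<^esub> (r \<odot>\<^bsub>M\<^esub> x)" using u r x by (simp add: smult_assoc1)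
  also have "\<dots> = x" by (simp add: r(2)[symmetric] y(2)[symmetric])
  finally have x1: "x = (u \<otimes> r) \<odot>\<^bsub>M\<^esub> x" by simp
  have "(\<one> \<ominus> u \<otimes> r) \<odot>\<^bsub>M\<^esub> x = x \<oplus>\<^bsub>M\<^esub> \<ominus>\<^bsub>M\<^esub> ((u \<otimes> r) \<odot>\<^bsub>M\<^esub> x)"
    using ur x by (simp add: a_minus_def smult_l_distr smult_l_minus)
  also have "\<dots> = \<zero>\<^bsub>M\<^esub>" using x1[symmetric] x by (simp add: M.r_neg)
  finally have e0: "(\<one> \<ominus> u \<otimes> r) \<odot>\<^bsub>M\<^esub> x = \<zero>\<^bsub>M\<^esub>" .
  have U: "\<one> \<ominus> u \<otimes> r \<in> Units R" using hD r(1) .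
  have "x = inv (\<one> \<ominus> u \<otimes> r) \<odot>\<^bsub>M\<^esub> ((\<one> \<ominus> u \<otimes> r) \<odot>\<^bsub>M\<^esub> x)"
    using U x by (simp add: smult_assoc1[symmetric] Units_l_inv Units_closed Units_inv_closed)
  also have "\<dots> = \<zero>\<^bsub>M\<^esub>" using e0 U by (simp add: Units_inv_closed)
  finally show False using x by simp
qed

lemma step3:
  assumes x: "x \<in> carrier M" "x \<notin> vS"
    and H: "\<forall>y\<in>carrier M. \<exists>r\<in>carrier R. \<exists>a\<in>carrier M. \<exists>b\<in>carrier M.
              y = r \<odot>\<^bsub>M\<^esub> x \<oplus>\<^bsub>M\<^esub> u \<odot>\<^bsub>M\<^esub> a \<oplus>\<^bsub>M\<^esub> v \<odot>\<^bsub>M\<^esub> b"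
  shows "\<forall>y\<in>carrier M. \<exists>r\<in>carrier R. \<exists>b\<in>carrier M. y = r \<odot>\<^bsub>M\<^esub> x \<oplus>\<^bsub>M\<^esub> v \<odot>\<^bsub>M\<^esub> b"
proof -
  let ?X = "(\<lambda>r. r \<odot>\<^bsub>M\<^esub> x) ` carrier R"
  let ?N = "?X <+>\<^bsub>M\<^esub> vS"
  have N: "submodule ?N R M"
    using sum_submodule[OF cyclic_submodule[OF x(1)] smult_image_submodule[OF v]] .
  have mem: "z \<in> ?N \<longleftrightarrow> (\<exists>r\<in>carrier R. \<exists>b\<in>carrier M. z = r \<odot>\<^bsub>M\<^esub> x \<oplus>\<^bsub>M\<^esub> v \<odot>\<^bsub>M\<^esub> b)" for z
    unfolding set_add_def' by auto
  have "?N = carrier M"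
  proof (rule ccontr)
    assume ne: "?N \<noteq> carrier M"
    have vN: "vS \<subseteq> ?N"
    proof
      fix z assume "z \<in> vS"
      then obtain b where b: "b \<in> carrier M" "z = v \<odot>\<^bsub>M\<^esub> b" by auto
      have "z = \<zero> \<odot>\<^bsub>M\<^esub> x \<oplus>\<^bsub>M\<^esub> v \<odot>\<^bsub>M\<^esub> b" using b x v by simp
      thus "z \<in> ?N" unfolding mem using b by blast
    qed
    have HH: "\<forall>y\<in>carrier M. \<exists>n\<in>?N. \<exists>w\<in>carrier M. y = n \<oplus>\<^bsub>M\<^esub> u \<odot>\<^bsub>M\<^esub> w"
    proof
      fix y assume y: "y \<in> carrier M"
      then obtain r a b where rab: "r \<in> carrier R" "a \<in> carrier M" "b \<in> carrier M"
        "y = r \<odot>\<^bsub>M\<^esub> x \<oplus>\<^bsub>M\<^esub> u \<odot>\<^bsub>M\<^esub> a \<oplus>\<^bsub>M\<^esub> v \<odot>\<^bsub>M\<^esub> b" using H by blast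
      have "y = (r \<odot>\<^bsub>M\<^esub> x \<oplus>\<^bsub>M\<^esub> v \<odot>\<^bsub>M\<^esub> b) \<oplus>\<^bsub>M\<^esub> u \<odot>\<^bsub>M\<^esub> a"
        using rab x u v by (simp add: M.a_ac)
      moreover have "r \<odot>\<^bsub>M\<^esub> x \<oplus>\<^bsub>M\<^esub> v \<odot>\<^bsub>M\<^esub> b \<in> ?N" unfolding mem using rab by blast
      ultimately show "\<exists>n\<in>?N. \<exists>w\<in>carrier M. y = n \<oplus>\<^bsub>M\<^esub> u \<odot>\<^bsub>M\<^esub> w" using rab by blast
    qed
    have "?N \<subseteq> vS" using sub_vS[OF N ne vN HH] .
    moreover have "x \<in> ?N" unfolding mem using x v
      by (intro bexI[of _ \<one>] bexI[of _ "\<zero>\<^bsub>M\<^esub>"]) auto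
    ultimately show False using x(2) by blast
  qed
  show ?thesis
  proof
    fix y assume "y \<in> carrier M"
    hence "y \<in> ?N" using \<open>?N = carrier M\<close> by simp
    thus "\<exists>r\<in>carrier R. \<exists>b\<in>carrier M. y = r \<odot>\<^bsub>M\<^esub> x \<oplus>\<^bsub>M\<^esub> v \<odot>\<^bsub>M\<^esub> b" unfolding mem .
  qed
qed

end

locale pbs =
  fixes R1 :: "'a ring" and R2 :: "'b ring" and Rbar :: "'c ring"
    and V1 :: "'a \<Rightarrow> 'c" and V2 :: "'b \<Rightarrow> 'c"
    and p1 :: 'a and p2 :: 'b
    and M :: "('a \<times> 'b, 'm) module"
  assumes dvr1: "dvr R1" and dvr2: "dvr R2"
    and p1c: "p1 \<in> carrier R1" and p1m: "maximalideal (PIdl\<^bsub>R1\<^esub> p1) R1"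
    and p2c: "p2 \<in> carrier R2" and p2m: "maximalideal (PIdl\<^bsub>R2\<^esub> p2) R2"
    and fld: "field Rbar"
    and V1h: "V1 \<in> ring_hom R1 Rbar" and V1s: "V1 ` carrier R1 = carrier Rbar"
    and V1k: "a_kernel R1 Rbar V1 = PIdl\<^bsub>R1\<^esub> p1"
    and V2h: "V2 \<in> ring_hom R2 Rbar" and V2s: "V2 ` carrier R2 = carrier Rbar"
    and V2k: "a_kernel R2 Rbar V2 = PIdl\<^bsub>R2\<^esub> p2"
    and modM: "module (pb_ring R1 R2 V1 V2) M"
    and nonzero: "carrier M \<noteq> {\<zero>\<^bsub>M\<^esub>}"
    and indec: "indecomposable (pb_ring R1 R2 V1 V2) M"
    and sep: "separated R1 R2 (PIdl\<^bsub>R1\<^esub> p1) (PIdl\<^bsub>R2\<^esub> p2) (pb_ring R1 R2 V1 V2) M"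
    and papm: "pap_multiplication_module (pb_ring R1 R2 V1 V2) M"
begin

abbreviation "R \<equiv> pb_ring R1 R2 V1 V2"

lemma uniq1: "\<exists>!P. maximalideal P R1" using dvr1 unfolding dvr_def by auto
lemma uniq2: "\<exists>!P. maximalideal P R2" using dvr2 unfolding dvr_def by auto

sublocale D1: principal_domain R1 using dvr1 unfolding dvr_def by auto
sublocale D2: principal_domain R2 using dvr2 unfolding dvr_def by auto
sublocale F: field Rbar by (rule fld)
sublocale H1: ring_hom_cring R1 Rbar V1
  by (rule ring_hom_cring.intro[OF D1.is_cring F.is_cring]) (unfold_locales, rule V1h)
sublocale H2: ring_hom_cring R2 Rbar V2
  by (rule ring_hom_cring.intro[OF D2.is_cring F.is_cring]) (unfold_locales, rule V2h)
sublocale MM: module R M by (rule modM)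

lemma mem_R [simp]: "(a, b) \<in> carrier R \<longleftrightarrow> a \<in> carrier R1 \<and> b \<in> carrier R2 \<and> V1 a = V2 b"
  by (simp add: pb_ring_def)
lemma carrier_R: "carrier R = {(a, b). a \<in> carrier R1 \<and> b \<in> carrier R2 \<and> V1 a = V2 b}"
  by (simp add: pb_ring_def)
lemma mult_R [simp]: "x \<otimes>\<^bsub>R\<^esub> y = (fst x \<otimes>\<^bsub>R1\<^esub> fst y, snd x \<otimes>\<^bsub>R2\<^esub> snd y)"
  by (simp add: pb_ring_def)
lemma add_R [simp]: "x \<oplus>\<^bsub>R\<^esub> y = (fst x \<oplus>\<^bsub>R1\<^esub> fst y, snd x \<oplus>\<^bsub>R2\<^esub> snd y)"
  by (simp add: pb_ring_def)
lemma one_R [simp]: "\<one>\<^bsub>R\<^esub> = (\<one>\<^bsub>R1\<^esub>, \<one>\<^bsub>R2\<^esub>)"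
  by (simp add: pb_ring_def)
lemma zero_R [simp]: "\<zero>\<^bsub>R\<^esub> = (\<zero>\<^bsub>R1\<^esub>, \<zero>\<^bsub>R2\<^esub>)"
  by (simp add: pb_ring_def)

lemma ker1: "a \<in> PIdl\<^bsub>R1\<^esub> p1 \<longleftrightarrow> a \<in> carrier R1 \<and> V1 a = \<zero>\<^bsub>Rbar\<^esub>"
  using V1k a_kernel_def'[of R1 Rbar V1] by auto
lemma ker2: "b \<in> PIdl\<^bsub>R2\<^esub> p2 \<longleftrightarrow> b \<in> carrier R2 \<and> V2 b = \<zero>\<^bsub>Rbar\<^esub>"
  using V2k a_kernel_def'[of R2 Rbar V2] by auto

lemma surj1: "c \<in> carrier Rbar \<Longrightarrow> \<exists>a\<in>carrier R1. V1 a = c" by (metis V1s image_iff)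
lemma surj2: "c \<in> carrier Rbar \<Longrightarrow> \<exists>b\<in>carrier R2. V2 b = c" by (metis V2s image_iff)

lemma P_iff: "(a, b) \<in> carrier R \<Longrightarrow> a \<in> PIdl\<^bsub>R1\<^esub> p1 \<longleftrightarrow> b \<in> PIdl\<^bsub>R2\<^esub> p2"
  using ker1 ker2 by auto

lemma unit_notin_P1: "w \<in> Units R1 \<Longrightarrow> w \<notin> PIdl\<^bsub>R1\<^esub> p1"
proof
  assume w: "w \<in> Units R1" "w \<in> PIdl\<^bsub>R1\<^esub> p1"
  have "\<one>\<^bsub>Rbar\<^esub> = V1 (inv\<^bsub>R1\<^esub> w \<otimes>\<^bsub>R1\<^esub> w)" using w(1) by simp
  also have "\<dots> = V1 (inv\<^bsub>R1\<^esub> w) \<otimes>\<^bsub>Rbar\<^esub> V1 w"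
    using w(1) by (intro H1.hom_mult) auto
  also have "\<dots> = \<zero>\<^bsub>Rbar\<^esub>" using w ker1 by simp
  finally show False by simp
qed

lemma unit_notin_P2: "w \<in> Units R2 \<Longrightarrow> w \<notin> PIdl\<^bsub>R2\<^esub> p2"
proof
  assume w: "w \<in> Units R2" "w \<in> PIdl\<^bsub>R2\<^esub> p2"
  have "\<one>\<^bsub>Rbar\<^esub> = V2 (inv\<^bsub>R2\<^esub> w \<otimes>\<^bsub>R2\<^esub> w)" using w(1) by simp
  also have "\<dots> = V2 (inv\<^bsub>R2\<^esub> w) \<otimes>\<^bsub>Rbar\<^esub> V2 w"
    using w(1) by (intro H2.hom_mult) auto
  also have "\<dots> = \<zero>\<^bsub>Rbar\<^esub>" using w ker2 by simp
  finally show False by simp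
qed

lemma nonunit1: "a \<in> carrier R1 \<Longrightarrow> a \<notin> PIdl\<^bsub>R1\<^esub> p1 \<Longrightarrow> a \<in> Units R1"
  using D1.dvr_nonunit_in_P[OF uniq1 p1m p1c] by blast
lemma nonunit2: "b \<in> carrier R2 \<Longrightarrow> b \<notin> PIdl\<^bsub>R2\<^esub> p2 \<Longrightarrow> b \<in> Units R2"
  using D2.dvr_nonunit_in_P[OF uniq2 p2m p2c] by blast

lemma unit_R:
  assumes r: "(a, b) \<in> carrier R" and a: "a \<notin> PIdl\<^bsub>R1\<^esub> p1"
  shows "(a, b) \<in> Units R"
proof -
  have b: "b \<notin> PIdl\<^bsub>R2\<^esub> p2" using P_iff[OF r] a by simp
  have rc: "a \<in> carrier R1" "b \<in> carrier R2" "V1 a = V2 b" using r by auto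
  have ua: "a \<in> Units R1" using nonunit1 rc(1) a by blast
  have ub: "b \<in> Units R2" using nonunit2 rc(2) b by blast
  have nz: "V1 a \<noteq> \<zero>\<^bsub>Rbar\<^esub>" using a ker1 rc by auto
  have "V1 (inv\<^bsub>R1\<^esub> a) \<otimes>\<^bsub>Rbar\<^esub> V1 a = V1 (inv\<^bsub>R1\<^esub> a \<otimes>\<^bsub>R1\<^esub> a)"
    using ua by (intro H1.hom_mult[symmetric]) auto
  also have "\<dots> = \<one>\<^bsub>Rbar\<^esub>" using ua by simp
  finally have A: "V1 (inv\<^bsub>R1\<^esub> a) \<otimes>\<^bsub>Rbar\<^esub> V1 a = \<one>\<^bsub>Rbar\<^esub>" .
  have "V2 (inv\<^bsub>R2\<^esub> b) \<otimes>\<^bsub>Rbar\<^esub> V2 b = V2 (inv\<^bsub>R2\<^esub> b \<otimes>\<^bsub>R2\<^esub> b)"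
    using ub by (intro H2.hom_mult[symmetric]) auto
  also have "\<dots> = \<one>\<^bsub>Rbar\<^esub>" using ub by simp
  finally have B: "V2 (inv\<^bsub>R2\<^esub> b) \<otimes>\<^bsub>Rbar\<^esub> V1 a = \<one>\<^bsub>Rbar\<^esub>" using rc(3) by simp
  have "V1 (inv\<^bsub>R1\<^esub> a) \<otimes>\<^bsub>Rbar\<^esub> V1 a = V2 (inv\<^bsub>R2\<^esub> b) \<otimes>\<^bsub>Rbar\<^esub> V1 a" using A B by simp
  hence e: "V1 (inv\<^bsub>R1\<^esub> a) = V2 (inv\<^bsub>R2\<^esub> b)"
    using F.m_rcancel[OF nz] ua ub rc by simp
  have "(inv\<^bsub>R1\<^esub> a, inv\<^bsub>R2\<^esub> b) \<in> carrier R" using e ua ub by simp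
  moreover have "(inv\<^bsub>R1\<^esub> a, inv\<^bsub>R2\<^esub> b) \<otimes>\<^bsub>R\<^esub> (a, b) = \<one>\<^bsub>R\<^esub>" using ua ub by simp
  moreover have "(a, b) \<otimes>\<^bsub>R\<^esub> (inv\<^bsub>R1\<^esub> a, inv\<^bsub>R2\<^esub> b) = \<one>\<^bsub>R\<^esub>" using ua ub by simp
  ultimately show ?thesis unfolding Units_def using r by blast
qed

lemma unit_R2:
  assumes r: "(a, b) \<in> carrier R" and b: "b \<notin> PIdl\<^bsub>R2\<^esub> p2"
  shows "(a, b) \<in> Units R"
  using unit_R[OF r] P_iff[OF r] b by blast

definition "u1 = (p1, \<zero>\<^bsub>R2\<^esub>)"
definition "u2 = (\<zero>\<^bsub>R1\<^esub>, p2)"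

lemma p1P: "p1 \<in> PIdl\<^bsub>R1\<^esub> p1" using D1.cgenideal_self[OF p1c] .
lemma p2P: "p2 \<in> PIdl\<^bsub>R2\<^esub> p2" using D2.cgenideal_self[OF p2c] .
lemma V1p1: "V1 p1 = \<zero>\<^bsub>Rbar\<^esub>" using p1P ker1 by auto
lemma V2p2: "V2 p2 = \<zero>\<^bsub>Rbar\<^esub>" using p2P ker2 by auto

lemma u1c: "u1 \<in> carrier R" unfolding u1_def using p1c V1p1 by simp
lemma u2c: "u2 \<in> carrier R" unfolding u2_def using p2c V2p2 by simp
lemma u1u2: "u1 \<otimes>\<^bsub>R\<^esub> u2 = \<zero>\<^bsub>R\<^esub>" unfolding u1_def u2_def using p1c p2c by simp
lemma u2u1: "u2 \<otimes>\<^bsub>R\<^esub> u1 = \<zero>\<^bsub>R\<^esub>" unfolding u1_def u2_def using p1c p2c by simp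

lemma fst0:
  assumes r: "r \<in> carrier R" "fst r = \<zero>\<^bsub>R1\<^esub>"
  shows "\<exists>s\<in>carrier R. r = s \<otimes>\<^bsub>R\<^esub> u2"
proof -
  obtain b where rb: "r = (\<zero>\<^bsub>R1\<^esub>, b)" using r by (cases r) auto
  have "b \<in> PIdl\<^bsub>R2\<^esub> p2" using r rb ker2 by auto
  then obtain c where c: "c \<in> carrier R2" "b = c \<otimes>\<^bsub>R2\<^esub> p2" unfolding cgenideal_def by auto
  obtain c1 where c1: "c1 \<in> carrier R1" "V1 c1 = V2 c" using surj1[of "V2 c"] c by auto
  have "(c1, c) \<in> carrier R" using c c1 by simp
  moreover have "r = (c1, c) \<otimes>\<^bsub>R\<^esub> u2" unfolding u2_def using rb c c1 p2c by simp
  ultimately show ?thesis by blast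
qed

lemma snd0:
  assumes r: "r \<in> carrier R" "snd r = \<zero>\<^bsub>R2\<^esub>"
  shows "\<exists>s\<in>carrier R. r = s \<otimes>\<^bsub>R\<^esub> u1"
proof -
  obtain a where ra: "r = (a, \<zero>\<^bsub>R2\<^esub>)" using r by (cases r) auto
  have "a \<in> PIdl\<^bsub>R1\<^esub> p1" using r ra ker1 by auto
  then obtain c where c: "c \<in> carrier R1" "a = c \<otimes>\<^bsub>R1\<^esub> p1" unfolding cgenideal_def by auto
  obtain c2 where c2: "c2 \<in> carrier R2" "V2 c2 = V1 c" using surj2[of "V1 c"] c by auto
  have "(c, c2) \<in> carrier R" using c c2 by simp
  moreover have "r = (c, c2) \<otimes>\<^bsub>R\<^esub> u1" unfolding u1_def using ra c c2 p1c by simp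
  ultimately show ?thesis by blast
qed

lemma pow_u1: "u1 [^]\<^bsub>R\<^esub> Suc k = (p1 [^]\<^bsub>R1\<^esub> Suc k, \<zero>\<^bsub>R2\<^esub>)"
  by (induction k) (simp_all add: u1_def p1c)
lemma pow_u2: "u2 [^]\<^bsub>R\<^esub> Suc k = (\<zero>\<^bsub>R1\<^esub>, p2 [^]\<^bsub>R2\<^esub> Suc k)"
  by (induction k) (simp_all add: u2_def p2c)


lemma hB1:
  assumes r: "r \<in> carrier R" "fst r \<noteq> \<zero>\<^bsub>R1\<^esub>"
  shows "r \<in> Units R \<or> (\<exists>t\<in>carrier R. \<exists>k::nat. \<exists>s\<in>carrier R. t \<otimes>\<^bsub>R\<^esub> r = u1 [^]\<^bsub>R\<^esub> k \<oplus>\<^bsub>R\<^esub> s \<otimes>\<^bsub>R\<^esub> u2)"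
proof -
  obtain a b where ab: "r = (a, b)" by (cases r)
  have rc: "a \<in> carrier R1" "b \<in> carrier R2" "V1 a = V2 b" "a \<noteq> \<zero>\<^bsub>R1\<^esub>" using r ab by auto
  show ?thesis
  proof (cases "a \<in> PIdl\<^bsub>R1\<^esub> p1")
    case False
    then show ?thesis using unit_R r ab by auto
  next
    case True
    obtain k w where kw: "w \<in> Units R1" "a = w \<otimes>\<^bsub>R1\<^esub> p1 [^]\<^bsub>R1\<^esub> (k::nat)"
      using D1.dvr_factor[OF uniq1 p1m p1c rc(1) rc(4)] by blast
    have "k \<noteq> 0"
    proof
      assume "k = 0"
      hence "a = w" using kw D1.Units_closed[OF kw(1)] by simp
      thus False using unit_notin_P1[OF kw(1)] True by simp
    qed
    then obtain k' where k': "k = Suc k'" by (cases k) auto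
    let ?t1 = "inv\<^bsub>R1\<^esub> w"
    have t1: "?t1 \<in> carrier R1" using kw by simp
    obtain t2 where t2: "t2 \<in> carrier R2" "V2 t2 = V1 ?t1" using surj2[of "V1 ?t1"] t1 by auto
    have tc: "(?t1, t2) \<in> carrier R" using t1 t2 by simp
    have Va: "V1 a = \<zero>\<^bsub>Rbar\<^esub>" using True ker1 by simp
    have Vb0: "V2 b = \<zero>\<^bsub>Rbar\<^esub>" using Va rc(3) by simp
    have "V2 (t2 \<otimes>\<^bsub>R2\<^esub> b) = \<zero>\<^bsub>Rbar\<^esub>" using t2 rc(2) Vb0 H1.hom_closed[OF t1] by simp
    hence c0: "(\<zero>\<^bsub>R1\<^esub>, t2 \<otimes>\<^bsub>R2\<^esub> b) \<in> carrier R" using t2 rc by simp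
    then obtain s where s: "s \<in> carrier R" "(\<zero>\<^bsub>R1\<^esub>, t2 \<otimes>\<^bsub>R2\<^esub> b) = s \<otimes>\<^bsub>R\<^esub> u2"
      using fst0[of "(\<zero>\<^bsub>R1\<^esub>, t2 \<otimes>\<^bsub>R2\<^esub> b)"] by auto
    have "?t1 \<otimes>\<^bsub>R1\<^esub> a = p1 [^]\<^bsub>R1\<^esub> k" using kw p1c
      by (simp add: D1.m_assoc[symmetric] D1.Units_l_inv D1.Units_closed D1.Units_inv_closed)
    hence "(?t1, t2) \<otimes>\<^bsub>R\<^esub> r = u1 [^]\<^bsub>R\<^esub> k \<oplus>\<^bsub>R\<^esub> (\<zero>\<^bsub>R1\<^esub>, t2 \<otimes>\<^bsub>R2\<^esub> b)"
      using ab k' pow_u1[of k'] p1c t2 rc by simp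
    thus ?thesis using s tc by metis
  qed
qed

lemma hB2:
  assumes r: "r \<in> carrier R" "snd r \<noteq> \<zero>\<^bsub>R2\<^esub>"
  shows "r \<in> Units R \<or> (\<exists>t\<in>carrier R. \<exists>k::nat. \<exists>s\<in>carrier R. t \<otimes>\<^bsub>R\<^esub> r = u2 [^]\<^bsub>R\<^esub> k \<oplus>\<^bsub>R\<^esub> s \<otimes>\<^bsub>R\<^esub> u1)"
proof -
  obtain a b where ab: "r = (a, b)" by (cases r)
  have rc: "a \<in> carrier R1" "b \<in> carrier R2" "V1 a = V2 b" "b \<noteq> \<zero>\<^bsub>R2\<^esub>" using r ab by auto
  show ?thesis
  proof (cases "b \<in> PIdl\<^bsub>R2\<^esub> p2")
    case False
    then show ?thesis using unit_R2 r ab by auto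
  next
    case True
    obtain k w where kw: "w \<in> Units R2" "b = w \<otimes>\<^bsub>R2\<^esub> p2 [^]\<^bsub>R2\<^esub> (k::nat)"
      using D2.dvr_factor[OF uniq2 p2m p2c rc(2) rc(4)] by blast
    have "k \<noteq> 0"
    proof
      assume "k = 0"
      hence "b = w" using kw D2.Units_closed[OF kw(1)] by simp
      thus False using unit_notin_P2[OF kw(1)] True by simp
    qed
    then obtain k' where k': "k = Suc k'" by (cases k) auto
    let ?t2 = "inv\<^bsub>R2\<^esub> w"
    have t2: "?t2 \<in> carrier R2" using kw by simp
    obtain t1 where t1: "t1 \<in> carrier R1" "V1 t1 = V2 ?t2" using surj1[of "V2 ?t2"] t2 by auto
    have tc: "(t1, ?t2) \<in> carrier R" using t1 t2 by simp
    have Vb: "V2 b = \<zero>\<^bsub>Rbar\<^esub>" using True ker2 by simp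
    have "V1 (t1 \<otimes>\<^bsub>R1\<^esub> a) = \<zero>\<^bsub>Rbar\<^esub>" using t1 rc Vb H2.hom_closed[OF t2] by simp
    hence c0: "(t1 \<otimes>\<^bsub>R1\<^esub> a, \<zero>\<^bsub>R2\<^esub>) \<in> carrier R" using t1 rc by simp
    then obtain s where s: "s \<in> carrier R" "(t1 \<otimes>\<^bsub>R1\<^esub> a, \<zero>\<^bsub>R2\<^esub>) = s \<otimes>\<^bsub>R\<^esub> u1"
      using snd0[of "(t1 \<otimes>\<^bsub>R1\<^esub> a, \<zero>\<^bsub>R2\<^esub>)"] by auto
    have "?t2 \<otimes>\<^bsub>R2\<^esub> b = p2 [^]\<^bsub>R2\<^esub> k" using kw p2c
      by (simp add: D2.m_assoc[symmetric] D2.Units_l_inv D2.Units_closed D2.Units_inv_closed)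
    hence "(t1, ?t2) \<otimes>\<^bsub>R\<^esub> r = u2 [^]\<^bsub>R\<^esub> k \<oplus>\<^bsub>R\<^esub> (t1 \<otimes>\<^bsub>R1\<^esub> a, \<zero>\<^bsub>R2\<^esub>)"
      using ab k' pow_u2[of k'] p2c t1 rc by simp
    thus ?thesis using s tc by metis
  qed
qed

lemma hD1:
  assumes r: "r \<in> carrier R"
  shows "\<one>\<^bsub>R\<^esub> \<ominus>\<^bsub>R\<^esub> u1 \<otimes>\<^bsub>R\<^esub> r \<in> Units R"
proof -
  define e where "e = \<one>\<^bsub>R\<^esub> \<ominus>\<^bsub>R\<^esub> u1 \<otimes>\<^bsub>R\<^esub> r"
  have ur: "u1 \<otimes>\<^bsub>R\<^esub> r \<in> carrier R" using u1c r by (rule MM.m_closed)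
  have ec: "e \<in> carrier R" unfolding e_def using ur by (simp add: MM.minus_closed del: mult_R one_R)
  have "e \<oplus>\<^bsub>R\<^esub> u1 \<otimes>\<^bsub>R\<^esub> r = \<one>\<^bsub>R\<^esub> \<oplus>\<^bsub>R\<^esub> (\<ominus>\<^bsub>R\<^esub> (u1 \<otimes>\<^bsub>R\<^esub> r) \<oplus>\<^bsub>R\<^esub> u1 \<otimes>\<^bsub>R\<^esub> r)"
    unfolding e_def a_minus_def by (intro MM.R.a_assoc MM.R.one_closed MM.R.a_inv_closed ur)
  also have "\<dots> = \<one>\<^bsub>R\<^esub>" using ur MM.R.l_neg[OF ur] MM.R.r_zero[OF MM.R.one_closed] by simp
  finally have E: "e \<oplus>\<^bsub>R\<^esub> u1 \<otimes>\<^bsub>R\<^esub> r = \<one>\<^bsub>R\<^esub>" .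
  obtain e1 e2 where ee: "e = (e1, e2)" by (cases e)
  from E have eq: "e1 \<oplus>\<^bsub>R1\<^esub> p1 \<otimes>\<^bsub>R1\<^esub> fst r = \<one>\<^bsub>R1\<^esub>" by (simp add: ee u1_def)
  have "e1 \<notin> PIdl\<^bsub>R1\<^esub> p1"
  proof
    assume A: "e1 \<in> PIdl\<^bsub>R1\<^esub> p1"
    have fr: "fst r \<in> carrier R1" using r by (cases r) auto
    have B: "p1 \<otimes>\<^bsub>R1\<^esub> fst r \<in> PIdl\<^bsub>R1\<^esub> p1" unfolding cgenideal_def using fr p1c
      by (auto intro!: exI[of _ "fst r"] simp: D1.m_comm)
    have "\<one>\<^bsub>R1\<^esub> \<in> PIdl\<^bsub>R1\<^esub> p1"
      using eq additive_subgroup.a_closed[OF ideal.axioms(1)[OF D1.cgenideal_ideal[OF p1c]] A B] by simp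
    thus False using unit_notin_P1[of "\<one>\<^bsub>R1\<^esub>"] by simp
  qed
  hence "(e1, e2) \<in> Units R" using unit_R[of e1 e2] ec ee by simp
  thus ?thesis using ee unfolding e_def by simp
qed

lemma hD2:
  assumes r: "r \<in> carrier R"
  shows "\<one>\<^bsub>R\<^esub> \<ominus>\<^bsub>R\<^esub> u2 \<otimes>\<^bsub>R\<^esub> r \<in> Units R"
proof -
  define e where "e = \<one>\<^bsub>R\<^esub> \<ominus>\<^bsub>R\<^esub> u2 \<otimes>\<^bsub>R\<^esub> r"
  have ur: "u2 \<otimes>\<^bsub>R\<^esub> r \<in> carrier R" using u2c r by (rule MM.m_closed)
  have ec: "e \<in> carrier R" unfolding e_def using ur by (simp add: MM.minus_closed del: mult_R one_R)
  have "e \<oplus>\<^bsub>R\<^esub> u2 \<otimes>\<^bsub>R\<^esub> r = \<one>\<^bsub>R\<^esub> \<oplus>\<^bsub>R\<^esub> (\<ominus>\<^bsub>R\<^esub> (u2 \<otimes>\<^bsub>R\<^esub> r) \<oplus>\<^bsub>R\<^esub> u2 \<otimes>\<^bsub>R\<^esub> r)"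
    unfolding e_def a_minus_def by (intro MM.R.a_assoc MM.R.one_closed MM.R.a_inv_closed ur)
  also have "\<dots> = \<one>\<^bsub>R\<^esub>" using ur MM.R.l_neg[OF ur] MM.R.r_zero[OF MM.R.one_closed] by simp
  finally have E: "e \<oplus>\<^bsub>R\<^esub> u2 \<otimes>\<^bsub>R\<^esub> r = \<one>\<^bsub>R\<^esub>" .
  obtain e1 e2 where ee: "e = (e1, e2)" by (cases e)
  from E have eq: "e2 \<oplus>\<^bsub>R2\<^esub> p2 \<otimes>\<^bsub>R2\<^esub> snd r = \<one>\<^bsub>R2\<^esub>" by (simp add: ee u2_def)
  have "e2 \<notin> PIdl\<^bsub>R2\<^esub> p2"
  proof
    assume A: "e2 \<in> PIdl\<^bsub>R2\<^esub> p2"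
    have fr: "snd r \<in> carrier R2" using r by (cases r) auto
    have B: "p2 \<otimes>\<^bsub>R2\<^esub> snd r \<in> PIdl\<^bsub>R2\<^esub> p2" unfolding cgenideal_def using fr p2c
      by (auto intro!: exI[of _ "snd r"] simp: D2.m_comm)
    have "\<one>\<^bsub>R2\<^esub> \<in> PIdl\<^bsub>R2\<^esub> p2"
      using eq additive_subgroup.a_closed[OF ideal.axioms(1)[OF D2.cgenideal_ideal[OF p2c]] A B] by simp
    thus False using unit_notin_P2[of "\<one>\<^bsub>R2\<^esub>"] by simp
  qed
  hence "(e1, e2) \<in> Units R" using unit_R2[of e1 e2] ec ee by simp
  thus ?thesis using ee unfolding e_def by simp
qed

lemma fst_mult_carrier: "r \<in> carrier R \<Longrightarrow> fst r \<in> carrier R1" by (cases r) auto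
lemma snd_mult_carrier: "r \<in> carrier R \<Longrightarrow> snd r \<in> carrier R2" by (cases r) auto

sublocale S1: side R M u1 u2 fst "\<zero>\<^bsub>R1\<^esub>"
proof (intro side.intro modM side_axioms.intro)
  show "u1 \<in> carrier R" by (rule u1c)
  show "u2 \<in> carrier R" by (rule u2c)
  show "u1 \<otimes>\<^bsub>R\<^esub> u2 = \<zero>\<^bsub>R\<^esub>" by (rule u1u2)
  show "\<And>r. r \<in> carrier R \<Longrightarrow> fst r = \<zero>\<^bsub>R1\<^esub> \<Longrightarrow> \<exists>s\<in>carrier R. r = s \<otimes>\<^bsub>R\<^esub> u2" by (rule fst0)
  show "\<And>r. r \<in> carrier R \<Longrightarrow> fst r \<noteq> \<zero>\<^bsub>R1\<^esub> \<Longrightarrow> r \<in> Units R \<or>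
     (\<exists>t\<in>carrier R. \<exists>k::nat. \<exists>s\<in>carrier R. t \<otimes>\<^bsub>R\<^esub> r = u1 [^]\<^bsub>R\<^esub> k \<oplus>\<^bsub>R\<^esub> s \<otimes>\<^bsub>R\<^esub> u2)"
    by (rule hB1)
  show "fst \<one>\<^bsub>R\<^esub> \<noteq> \<zero>\<^bsub>R1\<^esub>" by simp
  show "\<And>a b c. a \<in> carrier R \<Longrightarrow> b \<in> carrier R \<Longrightarrow> c \<in> carrier R \<Longrightarrow>
       fst (a \<otimes>\<^bsub>R\<^esub> b \<otimes>\<^bsub>R\<^esub> c) = \<zero>\<^bsub>R1\<^esub> \<Longrightarrow>
       fst (a \<otimes>\<^bsub>R\<^esub> b) = \<zero>\<^bsub>R1\<^esub> \<or> fst (a \<otimes>\<^bsub>R\<^esub> c) = \<zero>\<^bsub>R1\<^esub> \<or> fst (b \<otimes>\<^bsub>R\<^esub> c) = \<zero>\<^bsub>R1\<^esub>"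
    using fst_mult_carrier by (auto simp: D1.integral_iff)
  show "\<And>r. r \<in> carrier R \<Longrightarrow> \<one>\<^bsub>R\<^esub> \<ominus>\<^bsub>R\<^esub> u1 \<otimes>\<^bsub>R\<^esub> r \<in> Units R" by (rule hD1)
  show "pap_multiplication_module R M" by (rule papm)
qed

sublocale S2: side R M u2 u1 snd "\<zero>\<^bsub>R2\<^esub>"
proof (intro side.intro modM side_axioms.intro)
  show "u2 \<in> carrier R" by (rule u2c)
  show "u1 \<in> carrier R" by (rule u1c)
  show "u2 \<otimes>\<^bsub>R\<^esub> u1 = \<zero>\<^bsub>R\<^esub>" by (rule u2u1)
  show "\<And>r. r \<in> carrier R \<Longrightarrow> snd r = \<zero>\<^bsub>R2\<^esub> \<Longrightarrow> \<exists>s\<in>carrier R. r = s \<otimes>\<^bsub>R\<^esub> u1" by (rule snd0)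
  show "\<And>r. r \<in> carrier R \<Longrightarrow> snd r \<noteq> \<zero>\<^bsub>R2\<^esub> \<Longrightarrow> r \<in> Units R \<or>
     (\<exists>t\<in>carrier R. \<exists>k::nat. \<exists>s\<in>carrier R. t \<otimes>\<^bsub>R\<^esub> r = u2 [^]\<^bsub>R\<^esub> k \<oplus>\<^bsub>R\<^esub> s \<otimes>\<^bsub>R\<^esub> u1)"
    by (rule hB2)
  show "snd \<one>\<^bsub>R\<^esub> \<noteq> \<zero>\<^bsub>R2\<^esub>" by simp
  show "\<And>a b c. a \<in> carrier R \<Longrightarrow> b \<in> carrier R \<Longrightarrow> c \<in> carrier R \<Longrightarrow>
       snd (a \<otimes>\<^bsub>R\<^esub> b \<otimes>\<^bsub>R\<^esub> c) = \<zero>\<^bsub>R2\<^esub> \<Longrightarrow>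
       snd (a \<otimes>\<^bsub>R\<^esub> b) = \<zero>\<^bsub>R2\<^esub> \<or> snd (a \<otimes>\<^bsub>R\<^esub> c) = \<zero>\<^bsub>R2\<^esub> \<or> snd (b \<otimes>\<^bsub>R\<^esub> c) = \<zero>\<^bsub>R2\<^esub>"
    using snd_mult_carrier by (auto simp: D2.integral_iff)
  show "\<And>r. r \<in> carrier R \<Longrightarrow> \<one>\<^bsub>R\<^esub> \<ominus>\<^bsub>R\<^esub> u2 \<otimes>\<^bsub>R\<^esub> r \<in> Units R" by (rule hD2)
  show "pap_multiplication_module R M" by (rule papm)
qed

end

context pbs
begin

abbreviation "u1S \<equiv> (\<lambda>x. u1 \<odot>\<^bsub>M\<^esub> x) ` carrier M"
abbreviation "u2S \<equiv> (\<lambda>x. u2 \<odot>\<^bsub>M\<^esub> x) ` carrier M"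
abbreviation "Q \<equiv> u1S <+>\<^bsub>M\<^esub> u2S"

lemma u1S_sub: "submodule u1S R M" using MM.smult_image_submodule[OF u1c] .
lemma u2S_sub: "submodule u2S R M" using MM.smult_image_submodule[OF u2c] .
lemma Q_sub: "submodule Q R M" using MM.sum_submodule[OF u1S_sub u2S_sub] .

lemma Qmem: "z \<in> Q \<longleftrightarrow> (\<exists>a\<in>carrier M. \<exists>b\<in>carrier M. z = u1 \<odot>\<^bsub>M\<^esub> a \<oplus>\<^bsub>M\<^esub> u2 \<odot>\<^bsub>M\<^esub> b)"
  unfolding set_add_def' by auto

lemma sepI:
  assumes "y \<in> u1S" "y \<in> u2S" shows "y = \<zero>\<^bsub>M\<^esub>"
proof -
  have A: "u1 \<in> {(a, \<zero>\<^bsub>R2\<^esub>) | a. a \<in> PIdl\<^bsub>R1\<^esub> p1}" unfolding u1_def using p1P by auto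
  have B: "u2 \<in> {(\<zero>\<^bsub>R1\<^esub>, b) | b. b \<in> PIdl\<^bsub>R2\<^esub> p2}" unfolding u2_def using p2P by auto
  have "y \<in> ideal_smod R M {(a, \<zero>\<^bsub>R2\<^esub>) | a. a \<in> PIdl\<^bsub>R1\<^esub> p1}"
    using assms(1) A unfolding ideal_smod_def by blast
  moreover have "y \<in> ideal_smod R M {(\<zero>\<^bsub>R1\<^esub>, b) | b. b \<in> PIdl\<^bsub>R2\<^esub> p2}"
    using assms(2) B unfolding ideal_smod_def by blast
  ultimately show ?thesis using sep unfolding separated_def by blast
qed

lemma step1: "\<exists>x\<in>carrier M. x \<notin> Q"
proof (rule ccontr)
  assume "\<not> (\<exists>x\<in>carrier M. x \<notin> Q)"
  hence CQ: "carrier M \<subseteq> Q" by auto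
  have QC: "Q = carrier M" using CQ MM.submoduleE(1)[OF Q_sub] by auto
  have z1: "\<zero>\<^bsub>M\<^esub> \<in> u1S" using u1c by (intro image_eqI[of _ _ "\<zero>\<^bsub>M\<^esub>"]) auto
  have z2: "\<zero>\<^bsub>M\<^esub> \<in> u2S" using u2c by (intro image_eqI[of _ _ "\<zero>\<^bsub>M\<^esub>"]) auto
  have "u1S \<inter> u2S = {\<zero>\<^bsub>M\<^esub>}" using sepI z1 z2 by blast
  hence "u1S = {\<zero>\<^bsub>M\<^esub>} \<or> u2S = {\<zero>\<^bsub>M\<^esub>}"
    using indec u1S_sub u2S_sub QC unfolding indecomposable_def by blast
  thus False
  proof
    assume z: "u1S = {\<zero>\<^bsub>M\<^esub>}"
    have "carrier M \<subseteq> u2S"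
    proof
      fix y assume "y \<in> carrier M"
      then obtain a b where ab: "a \<in> u1S" "b \<in> u2S" "y = a \<oplus>\<^bsub>M\<^esub> b"
        using CQ unfolding set_add_def' by blast
      have "b \<in> carrier M" using ab(2) u2c by auto
      hence "y = b" using ab z by simp
      thus "y \<in> u2S" using ab by simp
    qed
    thus False using S2.nak z nonzero by blast
  next
    assume z: "u2S = {\<zero>\<^bsub>M\<^esub>}"
    have "carrier M \<subseteq> u1S"
    proof
      fix y assume "y \<in> carrier M"
      then obtain a b where ab: "a \<in> u1S" "b \<in> u2S" "y = a \<oplus>\<^bsub>M\<^esub> b"
        using CQ unfolding set_add_def' by blast
      have "a \<in> carrier M" using ab(1) u1c by auto
      hence "y = a" using ab z by simp
      thus "y \<in> u1S" using ab by simp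
    qed
    thus False using S1.nak z nonzero by blast
  qed
qed

definition "Pset = {r \<in> carrier R. fst r \<in> PIdl\<^bsub>R1\<^esub> p1}"

lemma Pacts:
  assumes r: "r \<in> Pset" and y: "y \<in> carrier M"
  shows "r \<odot>\<^bsub>M\<^esub> y \<in> Q"
proof -
  obtain a b where ab: "r = (a, b)" by (cases r)
  have rc: "a \<in> carrier R1" "b \<in> carrier R2" "V1 a = V2 b" "a \<in> PIdl\<^bsub>R1\<^esub> p1"
    using r ab unfolding Pset_def by auto
  have bP: "b \<in> PIdl\<^bsub>R2\<^esub> p2" using P_iff[of a b] rc by simp
  have Va: "V1 a = \<zero>\<^bsub>Rbar\<^esub>" using rc ker1 by auto
  have Vb: "V2 b = \<zero>\<^bsub>Rbar\<^esub>" using bP ker2 by auto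
  have c1: "(a, \<zero>\<^bsub>R2\<^esub>) \<in> carrier R" using rc Va by simp
  have c2: "(\<zero>\<^bsub>R1\<^esub>, b) \<in> carrier R" using rc Vb by simp
  obtain s where s: "s \<in> carrier R" "(a, \<zero>\<^bsub>R2\<^esub>) = s \<otimes>\<^bsub>R\<^esub> u1" using snd0[OF c1] by auto
  obtain s' where s': "s' \<in> carrier R" "(\<zero>\<^bsub>R1\<^esub>, b) = s' \<otimes>\<^bsub>R\<^esub> u2" using fst0[OF c2] by auto
  have "r = (a, \<zero>\<^bsub>R2\<^esub>) \<oplus>\<^bsub>R\<^esub> (\<zero>\<^bsub>R1\<^esub>, b)" using ab rc by simp
  hence "r \<odot>\<^bsub>M\<^esub> y = (a, \<zero>\<^bsub>R2\<^esub>) \<odot>\<^bsub>M\<^esub> y \<oplus>\<^bsub>M\<^esub> (\<zero>\<^bsub>R1\<^esub>, b) \<odot>\<^bsub>M\<^esub> y"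
    using MM.smult_l_distr[OF c1 c2 y] by simp
  also have "\<dots> = u1 \<odot>\<^bsub>M\<^esub> (s \<odot>\<^bsub>M\<^esub> y) \<oplus>\<^bsub>M\<^esub> u2 \<odot>\<^bsub>M\<^esub> (s' \<odot>\<^bsub>M\<^esub> y)"
    using s s' y u1c u2c
    by (simp only: MM.smult_assoc1[symmetric] MM.m_comm)
  finally show ?thesis unfolding Qmem using s s' y by blast
qed


lemma Pset_two_abs: "ideal Pset R \<Longrightarrow> two_absorbing_primary R Pset"
proof (rule MM.two_abs_of_prime3)
  assume "ideal Pset R" thus "ideal Pset R" .
  have "\<one>\<^bsub>R1\<^esub> \<notin> PIdl\<^bsub>R1\<^esub> p1" using unit_notin_P1[of "\<one>\<^bsub>R1\<^esub>"] by simp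
  hence "(\<one>\<^bsub>R1\<^esub>, \<one>\<^bsub>R2\<^esub>) \<notin> Pset" unfolding Pset_def by simp
  moreover have "(\<one>\<^bsub>R1\<^esub>, \<one>\<^bsub>R2\<^esub>) \<in> carrier R" by simp
  ultimately show "Pset \<noteq> carrier R" by blast
next
  fix a b c assume abc: "a \<in> carrier R" "b \<in> carrier R" "c \<in> carrier R" "a \<otimes>\<^bsub>R\<^esub> b \<otimes>\<^bsub>R\<^esub> c \<in> Pset"
  have pr: "primeideal (PIdl\<^bsub>R1\<^esub> p1) R1" using D1.maximalideal_prime[OF p1m] .
  have idl: "ideal (PIdl\<^bsub>R1\<^esub> p1) R1" using D1.cgenideal_ideal[OF p1c] .
  have fc: "fst a \<in> carrier R1" "fst b \<in> carrier R1" "fst c \<in> carrier R1"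
    using abc(1-3) fst_mult_carrier by blast+
  have "fst (a \<otimes>\<^bsub>R\<^esub> b \<otimes>\<^bsub>R\<^esub> c) \<in> PIdl\<^bsub>R1\<^esub> p1" using abc(4) unfolding Pset_def by blast
  hence h3: "(fst a \<otimes>\<^bsub>R1\<^esub> fst b) \<otimes>\<^bsub>R1\<^esub> fst c \<in> PIdl\<^bsub>R1\<^esub> p1" by simp
  have abc1: "fst a \<otimes>\<^bsub>R1\<^esub> fst b \<in> carrier R1" using fc by (intro D1.m_closed)
  have "fst a \<otimes>\<^bsub>R1\<^esub> fst b \<in> PIdl\<^bsub>R1\<^esub> p1 \<or> fst c \<in> PIdl\<^bsub>R1\<^esub> p1"
    using primeideal.I_prime[OF pr abc1 fc(3) h3] .
  thus "a \<otimes>\<^bsub>R\<^esub> b \<in> Pset \<or> a \<otimes>\<^bsub>R\<^esub> c \<in> Pset \<or> b \<otimes>\<^bsub>R\<^esub> c \<in> Pset"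
  proof
    assume h: "fst a \<otimes>\<^bsub>R1\<^esub> fst b \<in> PIdl\<^bsub>R1\<^esub> p1"
    have "a \<otimes>\<^bsub>R\<^esub> b \<in> carrier R" using abc by (intro MM.R.m_closed)
    moreover have "fst (a \<otimes>\<^bsub>R\<^esub> b) \<in> PIdl\<^bsub>R1\<^esub> p1" using h by simp
    ultimately show ?thesis unfolding Pset_def by blast
  next
    assume c1: "fst c \<in> PIdl\<^bsub>R1\<^esub> p1"
    have h: "fst a \<otimes>\<^bsub>R1\<^esub> fst c \<in> PIdl\<^bsub>R1\<^esub> p1"
      using ideal.I_l_closed[OF idl c1 fc(1)] .
    have "a \<otimes>\<^bsub>R\<^esub> c \<in> carrier R" using abc by (intro MM.R.m_closed)
    moreover have "fst (a \<otimes>\<^bsub>R\<^esub> c) \<in> PIdl\<^bsub>R1\<^esub> p1" using h by simp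
    ultimately show ?thesis unfolding Pset_def by blast
  qed
qed

lemma step2:
  assumes x: "x \<in> carrier M" "x \<notin> Q"
  shows "\<forall>y\<in>carrier M. \<exists>r\<in>carrier R. \<exists>a\<in>carrier M. \<exists>b\<in>carrier M.
           y = r \<odot>\<^bsub>M\<^esub> x \<oplus>\<^bsub>M\<^esub> u1 \<odot>\<^bsub>M\<^esub> a \<oplus>\<^bsub>M\<^esub> u2 \<odot>\<^bsub>M\<^esub> b"
proof -
  let ?X = "(\<lambda>r. r \<odot>\<^bsub>M\<^esub> x) ` carrier R"
  let ?N = "?X <+>\<^bsub>M\<^esub> Q"
  have N: "submodule ?N R M" using MM.sum_submodule[OF MM.cyclic_submodule[OF x(1)] Q_sub] .
  have mem: "z \<in> ?N \<longleftrightarrow> (\<exists>r\<in>carrier R. \<exists>q\<in>Q. z = r \<odot>\<^bsub>M\<^esub> x \<oplus>\<^bsub>M\<^esub> q)" for z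
    unfolding set_add_def'[of M ?X Q] by auto
  have QN: "Q \<subseteq> ?N"
  proof
    fix q assume q: "q \<in> Q"
    have "q \<in> carrier M" using q MM.submoduleE(1)[OF Q_sub] by auto
    hence "q = \<zero>\<^bsub>R\<^esub> \<odot>\<^bsub>M\<^esub> x \<oplus>\<^bsub>M\<^esub> q" using x MM.smult_l_null[OF x(1)] by simp
    thus "q \<in> ?N" unfolding mem using q MM.R.zero_closed by blast
  qed
  have xN: "x \<in> ?N"
  proof -
    have "\<zero>\<^bsub>M\<^esub> \<in> Q" unfolding Qmem using u1c u2c
      by (intro bexI[of _ "\<zero>\<^bsub>M\<^esub>"]) auto
    moreover have "x = \<one>\<^bsub>R\<^esub> \<odot>\<^bsub>M\<^esub> x \<oplus>\<^bsub>M\<^esub> \<zero>\<^bsub>M\<^esub>" using x MM.smult_one[OF x(1)] by simp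
    ultimately show ?thesis unfolding mem using MM.R.one_closed by blast
  qed
  have NC: "?N = carrier M"
  proof (rule ccontr)
    assume ne: "?N \<noteq> carrier M"
    have col: "mod_colon R M ?N = Pset"
    proof
      show "Pset \<subseteq> mod_colon R M ?N"
        unfolding mod_colon_def using Pacts QN by (auto simp: Pset_def)
      show "mod_colon R M ?N \<subseteq> Pset"
      proof
        fix r assume r: "r \<in> mod_colon R M ?N"
        hence rc: "r \<in> carrier R" and rN: "\<And>y. y \<in> carrier M \<Longrightarrow> r \<odot>\<^bsub>M\<^esub> y \<in> ?N"
          unfolding mod_colon_def by auto
        show "r \<in> Pset"
        proof (rule ccontr)
          assume "r \<notin> Pset"
          hence "fst r \<notin> PIdl\<^bsub>R1\<^esub> p1" using rc unfolding Pset_def by auto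
          hence U: "r \<in> Units R" using unit_R[of "fst r" "snd r"] rc by simp
          have "carrier M \<subseteq> ?N"
          proof
            fix y assume y: "y \<in> carrier M"
            have "y = inv\<^bsub>R\<^esub> r \<odot>\<^bsub>M\<^esub> (r \<odot>\<^bsub>M\<^esub> y)"
              using U y by (simp add: MM.smult_assoc1[symmetric] MM.R.Units_l_inv MM.R.Units_closed
                  MM.R.Units_inv_closed del: mult_R one_R)
            moreover have "inv\<^bsub>R\<^esub> r \<odot>\<^bsub>M\<^esub> (r \<odot>\<^bsub>M\<^esub> y) \<in> ?N"
              using MM.submoduleE(4)[OF N MM.R.Units_inv_closed[OF U] rN[OF y]] .
            ultimately show "y \<in> ?N" by simp
          qed
          thus False using ne MM.submoduleE(1)[OF N] by auto
        qed
      qed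
    qed
    have "pseudo_absorbing_primary R M ?N"
      unfolding pseudo_absorbing_primary_def using N ne col Pset_two_abs MM.colon_ideal[OF N] by simp
    then obtain I where I: "ideal I R" "?N = ideal_smod R M I"
      using papm unfolding pap_multiplication_module_def by blast
    have Isub: "I \<subseteq> carrier R" using ideal.Icarr[OF I(1)] by blast
    have "I \<subseteq> mod_colon R M ?N" using MM.smod_sub_colon[OF Isub] unfolding I(2) .
    hence "I \<subseteq> Pset" using col by simp
    hence "ideal_smod R M I \<subseteq> Q" using MM.smod_le[OF Q_sub, of I] Pacts by blast
    thus False using I(2) xN x(2) by auto
  qed
  show ?thesis
  proof
    fix y assume "y \<in> carrier M"
    hence "y \<in> ?N" using NC by simp
    then obtain r q where rq: "r \<in> carrier R" "q \<in> Q" "y = r \<odot>\<^bsub>M\<^esub> x \<oplus>\<^bsub>M\<^esub> q" unfolding mem by blast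
    then obtain a b where ab: "a \<in> carrier M" "b \<in> carrier M" "q = u1 \<odot>\<^bsub>M\<^esub> a \<oplus>\<^bsub>M\<^esub> u2 \<odot>\<^bsub>M\<^esub> b"
      unfolding Qmem by blast
    have c: "r \<odot>\<^bsub>M\<^esub> x \<in> carrier M" "u1 \<odot>\<^bsub>M\<^esub> a \<in> carrier M" "u2 \<odot>\<^bsub>M\<^esub> b \<in> carrier M"
      using rq(1) x(1) ab u1c u2c by (auto intro: MM.smult_closed)
    have "y = r \<odot>\<^bsub>M\<^esub> x \<oplus>\<^bsub>M\<^esub> (u1 \<odot>\<^bsub>M\<^esub> a \<oplus>\<^bsub>M\<^esub> u2 \<odot>\<^bsub>M\<^esub> b)"
      using rq(3) ab(3) by simp
    also have "\<dots> = r \<odot>\<^bsub>M\<^esub> x \<oplus>\<^bsub>M\<^esub> u1 \<odot>\<^bsub>M\<^esub> a \<oplus>\<^bsub>M\<^esub> u2 \<odot>\<^bsub>M\<^esub> b"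
      using c by (rule MM.M.a_assoc[symmetric])
    finally have "y = r \<odot>\<^bsub>M\<^esub> x \<oplus>\<^bsub>M\<^esub> u1 \<odot>\<^bsub>M\<^esub> a \<oplus>\<^bsub>M\<^esub> u2 \<odot>\<^bsub>M\<^esub> b" .
    thus "\<exists>r\<in>carrier R. \<exists>a\<in>carrier M. \<exists>b\<in>carrier M.
           y = r \<odot>\<^bsub>M\<^esub> x \<oplus>\<^bsub>M\<^esub> u1 \<odot>\<^bsub>M\<^esub> a \<oplus>\<^bsub>M\<^esub> u2 \<odot>\<^bsub>M\<^esub> b" using rq ab by blast
  qed
qed


lemma cyclic: "\<exists>x\<in>carrier M. x \<notin> Q \<and> (\<forall>y\<in>carrier M. \<exists>r\<in>carrier R. y = r \<odot>\<^bsub>M\<^esub> x)"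
proof -
  obtain x where x: "x \<in> carrier M" "x \<notin> Q" using step1 by blast
  have H1: "\<forall>y\<in>carrier M. \<exists>r\<in>carrier R. \<exists>a\<in>carrier M. \<exists>b\<in>carrier M.
           y = r \<odot>\<^bsub>M\<^esub> x \<oplus>\<^bsub>M\<^esub> u1 \<odot>\<^bsub>M\<^esub> a \<oplus>\<^bsub>M\<^esub> u2 \<odot>\<^bsub>M\<^esub> b" using step2[OF x] .
  have z1: "u1 \<odot>\<^bsub>M\<^esub> \<zero>\<^bsub>M\<^esub> = \<zero>\<^bsub>M\<^esub>" "u2 \<odot>\<^bsub>M\<^esub> \<zero>\<^bsub>M\<^esub> = \<zero>\<^bsub>M\<^esub>"
    using u1c u2c by (auto intro: MM.smult_r_null)
  have xv2: "x \<notin> u2S"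
  proof
    assume "x \<in> u2S"
    then obtain b where b: "b \<in> carrier M" "x = u2 \<odot>\<^bsub>M\<^esub> b" by auto
    have "x = u1 \<odot>\<^bsub>M\<^esub> \<zero>\<^bsub>M\<^esub> \<oplus>\<^bsub>M\<^esub> u2 \<odot>\<^bsub>M\<^esub> b" using z1 b u2c by simp
    thus False using x(2) b(1) MM.M.zero_closed unfolding Qmem by blast
  qed
  have xv1: "x \<notin> u1S"
  proof
    assume "x \<in> u1S"
    then obtain a where a: "a \<in> carrier M" "x = u1 \<odot>\<^bsub>M\<^esub> a" by auto
    have "x = u1 \<odot>\<^bsub>M\<^esub> a \<oplus>\<^bsub>M\<^esub> u2 \<odot>\<^bsub>M\<^esub> \<zero>\<^bsub>M\<^esub>" using z1 a u1c by simp
    thus False using x(2) a(1) MM.M.zero_closed unfolding Qmem by blast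
  qed
  have A: "\<forall>y\<in>carrier M. \<exists>r\<in>carrier R. \<exists>b\<in>carrier M. y = r \<odot>\<^bsub>M\<^esub> x \<oplus>\<^bsub>M\<^esub> u2 \<odot>\<^bsub>M\<^esub> b"
    using S1.step3[OF x(1) xv2 H1] .
  have H2: "\<forall>y\<in>carrier M. \<exists>r\<in>carrier R. \<exists>a\<in>carrier M. \<exists>b\<in>carrier M.
           y = r \<odot>\<^bsub>M\<^esub> x \<oplus>\<^bsub>M\<^esub> u2 \<odot>\<^bsub>M\<^esub> a \<oplus>\<^bsub>M\<^esub> u1 \<odot>\<^bsub>M\<^esub> b"
  proof
    fix y assume "y \<in> carrier M"
    then obtain r a b where rab: "r \<in> carrier R" "a \<in> carrier M" "b \<in> carrier M"
      "y = r \<odot>\<^bsub>M\<^esub> x \<oplus>\<^bsub>M\<^esub> u1 \<odot>\<^bsub>M\<^esub> a \<oplus>\<^bsub>M\<^esub> u2 \<odot>\<^bsub>M\<^esub> b" using H1 by blast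
    have c: "r \<odot>\<^bsub>M\<^esub> x \<in> carrier M" "u1 \<odot>\<^bsub>M\<^esub> a \<in> carrier M" "u2 \<odot>\<^bsub>M\<^esub> b \<in> carrier M"
      using rab x(1) u1c u2c by (auto intro: MM.smult_closed)
    have "y = r \<odot>\<^bsub>M\<^esub> x \<oplus>\<^bsub>M\<^esub> u2 \<odot>\<^bsub>M\<^esub> b \<oplus>\<^bsub>M\<^esub> u1 \<odot>\<^bsub>M\<^esub> a"
      using rab(4) c by (simp only: MM.M.a_assoc MM.M.a_comm)
    thus "\<exists>r\<in>carrier R. \<exists>a\<in>carrier M. \<exists>b\<in>carrier M.
           y = r \<odot>\<^bsub>M\<^esub> x \<oplus>\<^bsub>M\<^esub> u2 \<odot>\<^bsub>M\<^esub> a \<oplus>\<^bsub>M\<^esub> u1 \<odot>\<^bsub>M\<^esub> b" using rab by blast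
  qed
  have B: "\<forall>y\<in>carrier M. \<exists>r\<in>carrier R. \<exists>b\<in>carrier M. y = r \<odot>\<^bsub>M\<^esub> x \<oplus>\<^bsub>M\<^esub> u1 \<odot>\<^bsub>M\<^esub> b"
    using S2.step3[OF x(1) xv1 H2] .
  have "\<forall>y\<in>carrier M. \<exists>r\<in>carrier R. y = r \<odot>\<^bsub>M\<^esub> x"
  proof
    fix y assume y: "y \<in> carrier M"
    then obtain r b where rb: "r \<in> carrier R" "b \<in> carrier M" "y = r \<odot>\<^bsub>M\<^esub> x \<oplus>\<^bsub>M\<^esub> u2 \<odot>\<^bsub>M\<^esub> b"
      using A by blast
    then obtain s c where sc: "s \<in> carrier R" "c \<in> carrier M" "b = s \<odot>\<^bsub>M\<^esub> x \<oplus>\<^bsub>M\<^esub> u1 \<odot>\<^bsub>M\<^esub> c"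
      using B by blast
    have us: "u2 \<otimes>\<^bsub>R\<^esub> s \<in> carrier R" using u2c sc(1) by (rule MM.R.m_closed)
    have "u2 \<odot>\<^bsub>M\<^esub> b = u2 \<odot>\<^bsub>M\<^esub> (s \<odot>\<^bsub>M\<^esub> x) \<oplus>\<^bsub>M\<^esub> u2 \<odot>\<^bsub>M\<^esub> (u1 \<odot>\<^bsub>M\<^esub> c)"
      unfolding sc(3) using u2c u1c sc x(1) by (intro MM.smult_r_distr MM.smult_closed)
    also have "u2 \<odot>\<^bsub>M\<^esub> (u1 \<odot>\<^bsub>M\<^esub> c) = (u2 \<otimes>\<^bsub>R\<^esub> u1) \<odot>\<^bsub>M\<^esub> c"
      using u2c u1c sc(2) by (rule MM.smult_assoc1[symmetric])
    also have "\<dots> = \<zero>\<^bsub>M\<^esub>" unfolding u2u1 using sc(2) by (rule MM.smult_l_null)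
    also have "u2 \<odot>\<^bsub>M\<^esub> (s \<odot>\<^bsub>M\<^esub> x) = (u2 \<otimes>\<^bsub>R\<^esub> s) \<odot>\<^bsub>M\<^esub> x"
      using u2c sc(1) x(1) by (rule MM.smult_assoc1[symmetric])
    finally have "u2 \<odot>\<^bsub>M\<^esub> b = (u2 \<otimes>\<^bsub>R\<^esub> s) \<odot>\<^bsub>M\<^esub> x \<oplus>\<^bsub>M\<^esub> \<zero>\<^bsub>M\<^esub>" .
    hence "u2 \<odot>\<^bsub>M\<^esub> b = (u2 \<otimes>\<^bsub>R\<^esub> s) \<odot>\<^bsub>M\<^esub> x" using us x(1) MM.smult_closed MM.M.r_zero by metis
    hence "y = r \<odot>\<^bsub>M\<^esub> x \<oplus>\<^bsub>M\<^esub> (u2 \<otimes>\<^bsub>R\<^esub> s) \<odot>\<^bsub>M\<^esub> x" using rb(3) by simp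
    also have "\<dots> = (r \<oplus>\<^bsub>R\<^esub> u2 \<otimes>\<^bsub>R\<^esub> s) \<odot>\<^bsub>M\<^esub> x"
      using rb(1) us x(1) by (rule MM.smult_l_distr[symmetric])
    finally have "y = (r \<oplus>\<^bsub>R\<^esub> u2 \<otimes>\<^bsub>R\<^esub> s) \<odot>\<^bsub>M\<^esub> x" .
    moreover have "r \<oplus>\<^bsub>R\<^esub> u2 \<otimes>\<^bsub>R\<^esub> s \<in> carrier R" using rb(1) us by (rule MM.R.a_closed)
    ultimately show "\<exists>r\<in>carrier R. y = r \<odot>\<^bsub>M\<^esub> x" by blast
  qed
  thus ?thesis using x by blast
qed

end

lemma (in ring) ideal_rcos_eq:
  assumes I: "ideal I R" and a: "a \<in> carrier R" and b: "b \<in> carrier R"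
  shows "(I +> a = I +> b) \<longleftrightarrow> a \<ominus> b \<in> I"
proof -
  interpret I: ideal I R by (rule I)
  show ?thesis
  proof
    assume e: "I +> a = I +> b"
    have "a \<in> I +> b" using I.a_rcos_self[OF a] e by simp
    thus "a \<ominus> b \<in> I" using I.a_rcos_module_minus[OF ring_axioms b a] by simp
  next
    assume "a \<ominus> b \<in> I"
    hence "a \<in> I +> b" using I.a_rcos_module_minus[OF ring_axioms b a] by simp
    thus "I +> a = I +> b" using I.a_repr_independence'[of a b] b by simp
  qed
qed

lemma (in principal_domain) one_notin_P:
  assumes pmax: "maximalideal (PIdl p) R" and p: "p \<in> carrier R"
  shows "\<one> \<notin> PIdl p"
proof
  assume "\<one> \<in> PIdl p"
  then obtain c where c: "c \<in> carrier R" "\<one> = c \<otimes> p" unfolding cgenideal_def by auto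
  hence "p \<in> Units R" using p unfolding Units_def by (auto simp: m_comm)
  thus False using dvr_p_nonunit[OF pmax p] by simp
qed

lemma (in principal_domain) dvr_class:
  assumes uniq: "\<exists>!P. maximalideal P R" and pmax: "maximalideal (PIdl p) R" and p: "p \<in> carrier R"
    and JP: "J \<subseteq> PIdl p" and J0: "\<zero> \<in> J"
    and Jm: "\<And>c a. c \<in> carrier R \<Longrightarrow> a \<in> J \<Longrightarrow> c \<otimes> a \<in> J"
  shows "J = {\<zero>} \<or> (\<exists>n::nat. n \<ge> 1 \<and> J = PIdl (p [^] n))"
proof (cases "J \<subseteq> {\<zero>}")
  case True
  then show ?thesis using J0 by auto
next
  case False
  have Pc: "PIdl p \<subseteq> carrier R" unfolding cgenideal_def using p by auto
  have Jc: "J \<subseteq> carrier R" using JP Pc by auto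
  obtain a where a: "a \<in> J" "a \<noteq> \<zero>" using False by auto
  obtain k w where kw: "w \<in> Units R" "a = w \<otimes> p [^] (k::nat)"
    using dvr_factor[OF uniq pmax p _ a(2)] a(1) Jc by blast
  have "inv w \<otimes> a = p [^] k" using kw p by (simp add: m_assoc[symmetric] Units_l_inv Units_closed)
  hence ex: "\<exists>k. p [^] (k::nat) \<in> J" using Jm[OF _ a(1), of "inv w"] kw by (metis Units_inv_closed)
  define n where "n = (LEAST k. p [^] (k::nat) \<in> J)"
  have pn: "p [^] n \<in> J" unfolding n_def using ex by (rule LeastI_ex)
  have n1: "n \<ge> 1"
  proof (rule ccontr)
    assume "\<not> n \<ge> 1" hence "n = 0" by simp
    hence "\<one> \<in> J" using pn by simp
    thus False using JP one_notin_P[OF pmax p] by auto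
  qed
  have "J = PIdl (p [^] n)"
  proof
    show "PIdl (p [^] n) \<subseteq> J" unfolding cgenideal_def using Jm pn by auto
    show "J \<subseteq> PIdl (p [^] n)"
    proof
      fix b assume b: "b \<in> J"
      show "b \<in> PIdl (p [^] n)"
      proof (cases "b = \<zero>")
        case True
        then show ?thesis unfolding cgenideal_def using p by (auto intro!: exI[of _ \<zero>])
      next
        case False
        obtain k' w' where kw': "w' \<in> Units R" "b = w' \<otimes> p [^] (k'::nat)"
          using dvr_factor[OF uniq pmax p _ False] b Jc by blast
        have "inv w' \<otimes> b = p [^] k'" using kw' p by (simp add: m_assoc[symmetric] Units_l_inv Units_closed)
        hence "p [^] k' \<in> J" using Jm[OF _ b, of "inv w'"] kw' by (metis Units_inv_closed)
        hence nk: "n \<le> k'" unfolding n_def by (rule Least_le)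
        have "p [^] k' = p [^] (k' - n) \<otimes> p [^] n" using nk p by (simp add: nat_pow_mult)
        hence be: "b = (w' \<otimes> p [^] (k' - n)) \<otimes> p [^] n" using kw' p by (simp add: m_assoc Units_closed)
        have "w' \<otimes> p [^] (k' - n) \<in> carrier R" using kw' p by (simp add: Units_closed)
        thus ?thesis unfolding cgenideal_def using be by blast
      qed
    qed
  qed
  thus ?thesis using n1 by blast
qed


context pbs
begin

definition "xg = (SOME x. x \<in> carrier M \<and> x \<notin> Q \<and> (\<forall>y\<in>carrier M. \<exists>r\<in>carrier R. y = r \<odot>\<^bsub>M\<^esub> x))"

lemma xg_all: "xg \<in> carrier M \<and> xg \<notin> Q \<and> (\<forall>y\<in>carrier M. \<exists>r\<in>carrier R. y = r \<odot>\<^bsub>M\<^esub> xg)"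
proof -
  have "\<exists>x. x \<in> carrier M \<and> x \<notin> Q \<and> (\<forall>y\<in>carrier M. \<exists>r\<in>carrier R. y = r \<odot>\<^bsub>M\<^esub> x)"
    using cyclic by blast
  thus ?thesis unfolding xg_def by (rule someI_ex)
qed

lemma xgc: "xg \<in> carrier M" using xg_all by blast
lemma xgQ: "xg \<notin> Q" using xg_all by blast
lemma xgcyc: "y \<in> carrier M \<Longrightarrow> \<exists>r\<in>carrier R. y = r \<odot>\<^bsub>M\<^esub> xg" using xg_all by blast

definition "J1 = {a. (a, \<zero>\<^bsub>R2\<^esub>) \<in> carrier R \<and> (a, \<zero>\<^bsub>R2\<^esub>) \<odot>\<^bsub>M\<^esub> xg = \<zero>\<^bsub>M\<^esub>}"
definition "J2 = {b. (\<zero>\<^bsub>R1\<^esub>, b) \<in> carrier R \<and> (\<zero>\<^bsub>R1\<^esub>, b) \<odot>\<^bsub>M\<^esub> xg = \<zero>\<^bsub>M\<^esub>}"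

lemma J1_P: "a \<in> J1 \<Longrightarrow> a \<in> PIdl\<^bsub>R1\<^esub> p1"
  unfolding J1_def using ker1 by auto
lemma J2_P: "b \<in> J2 \<Longrightarrow> b \<in> PIdl\<^bsub>R2\<^esub> p2"
  unfolding J2_def using ker2 by auto
lemma J1_c: "a \<in> J1 \<Longrightarrow> a \<in> carrier R1" unfolding J1_def by auto
lemma J2_c: "b \<in> J2 \<Longrightarrow> b \<in> carrier R2" unfolding J2_def by auto

lemma J1_zero: "\<zero>\<^bsub>R1\<^esub> \<in> J1"
proof -
  have "(\<zero>\<^bsub>R1\<^esub>, \<zero>\<^bsub>R2\<^esub>) \<odot>\<^bsub>M\<^esub> xg = \<zero>\<^bsub>M\<^esub>" using MM.smult_l_null[OF xgc] by simp
  thus ?thesis unfolding J1_def by simp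
qed
lemma J2_zero: "\<zero>\<^bsub>R2\<^esub> \<in> J2"
proof -
  have "(\<zero>\<^bsub>R1\<^esub>, \<zero>\<^bsub>R2\<^esub>) \<odot>\<^bsub>M\<^esub> xg = \<zero>\<^bsub>M\<^esub>" using MM.smult_l_null[OF xgc] by simp
  thus ?thesis unfolding J2_def by simp
qed

lemma J1_mult:
  assumes c: "c \<in> carrier R1" and a: "a \<in> J1"
  shows "c \<otimes>\<^bsub>R1\<^esub> a \<in> J1"
proof -
  obtain c2 where c2: "c2 \<in> carrier R2" "V2 c2 = V1 c" using surj2[of "V1 c"] c by auto
  have cc: "(c, c2) \<in> carrier R" using c c2 by simp
  have ac: "(a, \<zero>\<^bsub>R2\<^esub>) \<in> carrier R" and ax: "(a, \<zero>\<^bsub>R2\<^esub>) \<odot>\<^bsub>M\<^esub> xg = \<zero>\<^bsub>M\<^esub>"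
    using a unfolding J1_def by auto
  have e: "(c, c2) \<otimes>\<^bsub>R\<^esub> (a, \<zero>\<^bsub>R2\<^esub>) = (c \<otimes>\<^bsub>R1\<^esub> a, \<zero>\<^bsub>R2\<^esub>)" using c2 by simp
  have "(c \<otimes>\<^bsub>R1\<^esub> a, \<zero>\<^bsub>R2\<^esub>) \<in> carrier R" using MM.R.m_closed[OF cc ac] unfolding e .
  moreover have "(c \<otimes>\<^bsub>R1\<^esub> a, \<zero>\<^bsub>R2\<^esub>) \<odot>\<^bsub>M\<^esub> xg = \<zero>\<^bsub>M\<^esub>"
  proof -
    have "(c \<otimes>\<^bsub>R1\<^esub> a, \<zero>\<^bsub>R2\<^esub>) \<odot>\<^bsub>M\<^esub> xg = ((c, c2) \<otimes>\<^bsub>R\<^esub> (a, \<zero>\<^bsub>R2\<^esub>)) \<odot>\<^bsub>M\<^esub> xg" unfolding e ..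
    also have "\<dots> = (c, c2) \<odot>\<^bsub>M\<^esub> ((a, \<zero>\<^bsub>R2\<^esub>) \<odot>\<^bsub>M\<^esub> xg)" using cc ac xgc by (rule MM.smult_assoc1)
    also have "\<dots> = \<zero>\<^bsub>M\<^esub>" unfolding ax using cc by (rule MM.smult_r_null)
    finally show ?thesis .
  qed
  ultimately show ?thesis unfolding J1_def by simp
qed

lemma J2_mult:
  assumes c: "c \<in> carrier R2" and b: "b \<in> J2"
  shows "c \<otimes>\<^bsub>R2\<^esub> b \<in> J2"
proof -
  obtain c1 where c1: "c1 \<in> carrier R1" "V1 c1 = V2 c" using surj1[of "V2 c"] c by auto
  have cc: "(c1, c) \<in> carrier R" using c c1 by simp
  have bc: "(\<zero>\<^bsub>R1\<^esub>, b) \<in> carrier R" and bx: "(\<zero>\<^bsub>R1\<^esub>, b) \<odot>\<^bsub>M\<^esub> xg = \<zero>\<^bsub>M\<^esub>"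
    using b unfolding J2_def by auto
  have e: "(c1, c) \<otimes>\<^bsub>R\<^esub> (\<zero>\<^bsub>R1\<^esub>, b) = (\<zero>\<^bsub>R1\<^esub>, c \<otimes>\<^bsub>R2\<^esub> b)" using c1 by simp
  have "(\<zero>\<^bsub>R1\<^esub>, c \<otimes>\<^bsub>R2\<^esub> b) \<in> carrier R" using MM.R.m_closed[OF cc bc] unfolding e .
  moreover have "(\<zero>\<^bsub>R1\<^esub>, c \<otimes>\<^bsub>R2\<^esub> b) \<odot>\<^bsub>M\<^esub> xg = \<zero>\<^bsub>M\<^esub>"
  proof -
    have "(\<zero>\<^bsub>R1\<^esub>, c \<otimes>\<^bsub>R2\<^esub> b) \<odot>\<^bsub>M\<^esub> xg = ((c1, c) \<otimes>\<^bsub>R\<^esub> (\<zero>\<^bsub>R1\<^esub>, b)) \<odot>\<^bsub>M\<^esub> xg" unfolding e ..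
    also have "\<dots> = (c1, c) \<odot>\<^bsub>M\<^esub> ((\<zero>\<^bsub>R1\<^esub>, b) \<odot>\<^bsub>M\<^esub> xg)" using cc bc xgc by (rule MM.smult_assoc1)
    also have "\<dots> = \<zero>\<^bsub>M\<^esub>" unfolding bx using cc by (rule MM.smult_r_null)
    finally show ?thesis .
  qed
  ultimately show ?thesis unfolding J2_def by simp
qed


lemma J1_class: "J1 = {\<zero>\<^bsub>R1\<^esub>} \<or> (\<exists>n::nat. n \<ge> 1 \<and> J1 = PIdl\<^bsub>R1\<^esub> (p1 [^]\<^bsub>R1\<^esub> n))"
  using D1.dvr_class[OF uniq1 p1m p1c _ J1_zero J1_mult] J1_P by blast
lemma J2_class: "J2 = {\<zero>\<^bsub>R2\<^esub>} \<or> (\<exists>n::nat. n \<ge> 1 \<and> J2 = PIdl\<^bsub>R2\<^esub> (p2 [^]\<^bsub>R2\<^esub> n))"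
  using D2.dvr_class[OF uniq2 p2m p2c _ J2_zero J2_mult] J2_P by blast
lemma J1_ideal: "ideal J1 R1"
  using J1_class D1.zeroideal D1.cgenideal_ideal p1c by (metis D1.nat_pow_closed)
lemma J2_ideal: "ideal J2 R2"
  using J2_class D2.zeroideal D2.cgenideal_ideal p2c by (metis D2.nat_pow_closed)

lemma minus_R:
  assumes r: "r \<in> carrier R"
  shows "\<ominus>\<^bsub>R\<^esub> r = (\<ominus>\<^bsub>R1\<^esub> fst r, \<ominus>\<^bsub>R2\<^esub> snd r)"
proof -
  obtain a b where ab: "r = (a, b)" by (cases r)
  have c: "a \<in> carrier R1" "b \<in> carrier R2" "V1 a = V2 b" using r ab by auto
  have yc: "(\<ominus>\<^bsub>R1\<^esub> a, \<ominus>\<^bsub>R2\<^esub> b) \<in> carrier R" using c by simp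
  have "(\<ominus>\<^bsub>R1\<^esub> a, \<ominus>\<^bsub>R2\<^esub> b) \<oplus>\<^bsub>R\<^esub> r = \<zero>\<^bsub>R\<^esub>" using c ab D1.l_neg D2.l_neg by simp
  hence "\<ominus>\<^bsub>R\<^esub> r = (\<ominus>\<^bsub>R1\<^esub> a, \<ominus>\<^bsub>R2\<^esub> b)" using MM.R.minus_equality yc r by blast
  thus ?thesis using ab by simp
qed

lemma sub_R:
  assumes r: "r \<in> carrier R" and r': "r' \<in> carrier R"
  shows "r \<ominus>\<^bsub>R\<^esub> r' = (fst r \<ominus>\<^bsub>R1\<^esub> fst r', snd r \<ominus>\<^bsub>R2\<^esub> snd r')"
  unfolding a_minus_def using minus_R[OF r'] by simp

lemma ann_iff:
  assumes r: "r \<in> carrier R"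
  shows "r \<odot>\<^bsub>M\<^esub> xg = \<zero>\<^bsub>M\<^esub> \<longleftrightarrow> fst r \<in> J1 \<and> snd r \<in> J2"
proof -
  obtain a b where ab: "r = (a, b)" by (cases r)
  have c: "a \<in> carrier R1" "b \<in> carrier R2" "V1 a = V2 b" using r ab by auto
  have zQ: "\<zero>\<^bsub>M\<^esub> \<in> Q" unfolding Qmem using u1c u2c
    by (intro bexI[of _ "\<zero>\<^bsub>M\<^esub>"]) auto
  show ?thesis
  proof
    assume z: "r \<odot>\<^bsub>M\<^esub> xg = \<zero>\<^bsub>M\<^esub>"
    have aP: "a \<in> PIdl\<^bsub>R1\<^esub> p1"
    proof (rule ccontr)
      assume "a \<notin> PIdl\<^bsub>R1\<^esub> p1"
      hence U: "r \<in> Units R" using unit_R[of a b] r ab by simp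
      have "xg = inv\<^bsub>R\<^esub> r \<odot>\<^bsub>M\<^esub> (r \<odot>\<^bsub>M\<^esub> xg)"
        using U xgc by (simp add: MM.smult_assoc1[symmetric] MM.R.Units_l_inv MM.R.Units_closed
                  MM.R.Units_inv_closed del: mult_R one_R)
      also have "\<dots> = \<zero>\<^bsub>M\<^esub>" unfolding z using MM.R.Units_inv_closed[OF U] by (rule MM.smult_r_null)
      finally show False using xgQ zQ by simp
    qed
    have bP: "b \<in> PIdl\<^bsub>R2\<^esub> p2" using P_iff[of a b] r ab aP by simp
    have Va: "V1 a = \<zero>\<^bsub>Rbar\<^esub>" using aP ker1 by auto
    have Vb: "V2 b = \<zero>\<^bsub>Rbar\<^esub>" using bP ker2 by auto
    have c1: "(a, \<zero>\<^bsub>R2\<^esub>) \<in> carrier R" using c Va by simp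
    have c2: "(\<zero>\<^bsub>R1\<^esub>, b) \<in> carrier R" using c Vb by simp
    have rs: "r = (a, \<zero>\<^bsub>R2\<^esub>) \<oplus>\<^bsub>R\<^esub> (\<zero>\<^bsub>R1\<^esub>, b)" using ab c by simp
    have sum: "(a, \<zero>\<^bsub>R2\<^esub>) \<odot>\<^bsub>M\<^esub> xg \<oplus>\<^bsub>M\<^esub> (\<zero>\<^bsub>R1\<^esub>, b) \<odot>\<^bsub>M\<^esub> xg = \<zero>\<^bsub>M\<^esub>"
      using z MM.smult_l_distr[OF c1 c2 xgc] rs by simp
    obtain s where s: "s \<in> carrier R" "(a, \<zero>\<^bsub>R2\<^esub>) = s \<otimes>\<^bsub>R\<^esub> u1" using snd0[OF c1] by auto
    obtain s' where s': "s' \<in> carrier R" "(\<zero>\<^bsub>R1\<^esub>, b) = s' \<otimes>\<^bsub>R\<^esub> u2" using fst0[OF c2] by auto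
    have e1: "(a, \<zero>\<^bsub>R2\<^esub>) \<odot>\<^bsub>M\<^esub> xg = u1 \<odot>\<^bsub>M\<^esub> (s \<odot>\<^bsub>M\<^esub> xg)"
      unfolding s(2) using s(1) u1c xgc by (simp only: MM.smult_assoc1[symmetric] MM.m_comm)
    have e2: "(\<zero>\<^bsub>R1\<^esub>, b) \<odot>\<^bsub>M\<^esub> xg = u2 \<odot>\<^bsub>M\<^esub> (s' \<odot>\<^bsub>M\<^esub> xg)"
      unfolding s'(2) using s'(1) u2c xgc by (simp only: MM.smult_assoc1[symmetric] MM.m_comm)
    have sx: "s \<odot>\<^bsub>M\<^esub> xg \<in> carrier M" "s' \<odot>\<^bsub>M\<^esub> xg \<in> carrier M" using s s' xgc by auto
    have cc: "(a, \<zero>\<^bsub>R2\<^esub>) \<odot>\<^bsub>M\<^esub> xg \<in> carrier M" "(\<zero>\<^bsub>R1\<^esub>, b) \<odot>\<^bsub>M\<^esub> xg \<in> carrier M"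
      using c1 c2 xgc by (auto intro: MM.smult_closed)
    have "\<ominus>\<^bsub>M\<^esub> ((\<zero>\<^bsub>R1\<^esub>, b) \<odot>\<^bsub>M\<^esub> xg) = (a, \<zero>\<^bsub>R2\<^esub>) \<odot>\<^bsub>M\<^esub> xg"
      using MM.M.minus_equality[OF sum cc(2) cc(1)] .
    moreover have "\<ominus>\<^bsub>M\<^esub> ((\<zero>\<^bsub>R1\<^esub>, b) \<odot>\<^bsub>M\<^esub> xg) = u2 \<odot>\<^bsub>M\<^esub> (\<ominus>\<^bsub>M\<^esub> (s' \<odot>\<^bsub>M\<^esub> xg))"
      unfolding e2 using MM.smult_r_minus[OF u2c sx(2)] by simp
    ultimately have "(a, \<zero>\<^bsub>R2\<^esub>) \<odot>\<^bsub>M\<^esub> xg = u2 \<odot>\<^bsub>M\<^esub> (\<ominus>\<^bsub>M\<^esub> (s' \<odot>\<^bsub>M\<^esub> xg))" by simp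
    moreover have "\<ominus>\<^bsub>M\<^esub> (s' \<odot>\<^bsub>M\<^esub> xg) \<in> carrier M" using sx(2) by simp
    ultimately have "(a, \<zero>\<^bsub>R2\<^esub>) \<odot>\<^bsub>M\<^esub> xg \<in> u2S" by blast
    moreover have "(a, \<zero>\<^bsub>R2\<^esub>) \<odot>\<^bsub>M\<^esub> xg \<in> u1S" unfolding e1 using sx(1) by auto
    ultimately have z1: "(a, \<zero>\<^bsub>R2\<^esub>) \<odot>\<^bsub>M\<^esub> xg = \<zero>\<^bsub>M\<^esub>" using sepI by blast
    hence z2: "(\<zero>\<^bsub>R1\<^esub>, b) \<odot>\<^bsub>M\<^esub> xg = \<zero>\<^bsub>M\<^esub>" using sum cc by simp
    show "fst r \<in> J1 \<and> snd r \<in> J2" unfolding J1_def J2_def using ab c1 c2 z1 z2 by simp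
  next
    assume "fst r \<in> J1 \<and> snd r \<in> J2"
    hence h: "(a, \<zero>\<^bsub>R2\<^esub>) \<in> carrier R" "(a, \<zero>\<^bsub>R2\<^esub>) \<odot>\<^bsub>M\<^esub> xg = \<zero>\<^bsub>M\<^esub>"
      "(\<zero>\<^bsub>R1\<^esub>, b) \<in> carrier R" "(\<zero>\<^bsub>R1\<^esub>, b) \<odot>\<^bsub>M\<^esub> xg = \<zero>\<^bsub>M\<^esub>"
      unfolding J1_def J2_def using ab by auto
    have rs: "r = (a, \<zero>\<^bsub>R2\<^esub>) \<oplus>\<^bsub>R\<^esub> (\<zero>\<^bsub>R1\<^esub>, b)" using ab c by simp
    show "r \<odot>\<^bsub>M\<^esub> xg = \<zero>\<^bsub>M\<^esub>" unfolding rs using MM.smult_l_distr[OF h(1) h(3) xgc] h(2,4) by simp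
  qed
qed

end

context pbs
begin

abbreviation "C \<equiv> pb_module R1 R2 V1 V2 J1 J2"
definition "phi r = (J1 +>\<^bsub>R1\<^esub> fst r, J2 +>\<^bsub>R2\<^esub> snd r)"
definition "fiso y = phi (SOME r. r \<in> carrier R \<and> y = r \<odot>\<^bsub>M\<^esub> xg)"

lemma C_carrier: "carrier C = phi ` carrier R"
proof
  show "carrier C \<subseteq> phi ` carrier R"
  proof
    fix z assume "z \<in> carrier C"
    then obtain a b where ab: "a \<in> carrier R1" "b \<in> carrier R2" "V1 a = V2 b"
      "z = (J1 +>\<^bsub>R1\<^esub> a, J2 +>\<^bsub>R2\<^esub> b)" unfolding pb_module_def by auto
    hence "z = phi (a, b)" "(a, b) \<in> carrier R" unfolding phi_def by auto
    thus "z \<in> phi ` carrier R" by blast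
  qed
  show "phi ` carrier R \<subseteq> carrier C"
  proof
    fix z assume "z \<in> phi ` carrier R"
    then obtain a b where ab: "(a, b) \<in> carrier R" "z = phi (a, b)" by auto
    thus "z \<in> carrier C" unfolding pb_module_def phi_def by auto
  qed
qed

lemma C_add: "A \<oplus>\<^bsub>C\<^esub> B = (fst A <+>\<^bsub>R1\<^esub> fst B, snd A <+>\<^bsub>R2\<^esub> snd B)"
  by (simp add: pb_module_def)
lemma C_smult: "r \<odot>\<^bsub>C\<^esub> A = (rcoset_mult R1 J1 (J1 +>\<^bsub>R1\<^esub> fst r) (fst A),
     rcoset_mult R2 J2 (J2 +>\<^bsub>R2\<^esub> snd r) (snd A))"
  by (simp add: pb_module_def)

lemma heq:
  assumes r: "r \<in> carrier R" and r': "r' \<in> carrier R"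
  shows "r \<odot>\<^bsub>M\<^esub> xg = r' \<odot>\<^bsub>M\<^esub> xg \<longleftrightarrow> phi r = phi r'"
proof -
  have rr: "r \<ominus>\<^bsub>R\<^esub> r' \<in> carrier R" using r r' by (rule MM.R.minus_closed)
  have c: "r \<odot>\<^bsub>M\<^esub> xg \<in> carrier M" "r' \<odot>\<^bsub>M\<^esub> xg \<in> carrier M" using r r' xgc by (auto intro: MM.smult_closed)
  have e: "(r \<ominus>\<^bsub>R\<^esub> r') \<odot>\<^bsub>M\<^esub> xg = r \<odot>\<^bsub>M\<^esub> xg \<oplus>\<^bsub>M\<^esub> \<ominus>\<^bsub>M\<^esub> (r' \<odot>\<^bsub>M\<^esub> xg)"
    unfolding a_minus_def using MM.smult_l_distr[OF r MM.R.a_inv_closed[OF r'] xgc]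
      MM.smult_l_minus[OF r' xgc] by simp
  have mz: "r \<odot>\<^bsub>M\<^esub> xg = r' \<odot>\<^bsub>M\<^esub> xg \<longleftrightarrow> r \<odot>\<^bsub>M\<^esub> xg \<oplus>\<^bsub>M\<^esub> \<ominus>\<^bsub>M\<^esub> (r' \<odot>\<^bsub>M\<^esub> xg) = \<zero>\<^bsub>M\<^esub>"
  proof
    assume "r \<odot>\<^bsub>M\<^esub> xg = r' \<odot>\<^bsub>M\<^esub> xg"
    thus "r \<odot>\<^bsub>M\<^esub> xg \<oplus>\<^bsub>M\<^esub> \<ominus>\<^bsub>M\<^esub> (r' \<odot>\<^bsub>M\<^esub> xg) = \<zero>\<^bsub>M\<^esub>" using c by (simp add: MM.M.r_neg)
  next
    assume h: "r \<odot>\<^bsub>M\<^esub> xg \<oplus>\<^bsub>M\<^esub> \<ominus>\<^bsub>M\<^esub> (r' \<odot>\<^bsub>M\<^esub> xg) = \<zero>\<^bsub>M\<^esub>"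
    have "\<ominus>\<^bsub>M\<^esub> (\<ominus>\<^bsub>M\<^esub> (r' \<odot>\<^bsub>M\<^esub> xg)) = r \<odot>\<^bsub>M\<^esub> xg"
      using MM.M.minus_equality[OF h MM.M.a_inv_closed[OF c(2)] c(1)] .
    thus "r \<odot>\<^bsub>M\<^esub> xg = r' \<odot>\<^bsub>M\<^esub> xg" using MM.M.minus_minus[OF c(2)] by simp
  qed
  have fc: "fst r \<in> carrier R1" "fst r' \<in> carrier R1" "snd r \<in> carrier R2" "snd r' \<in> carrier R2"
    using r r' fst_mult_carrier snd_mult_carrier by auto
  have "r \<odot>\<^bsub>M\<^esub> xg = r' \<odot>\<^bsub>M\<^esub> xg \<longleftrightarrow> fst (r \<ominus>\<^bsub>R\<^esub> r') \<in> J1 \<and> snd (r \<ominus>\<^bsub>R\<^esub> r') \<in> J2"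
    using mz e ann_iff[OF rr] by simp
  also have "\<dots> \<longleftrightarrow> fst r \<ominus>\<^bsub>R1\<^esub> fst r' \<in> J1 \<and> snd r \<ominus>\<^bsub>R2\<^esub> snd r' \<in> J2"
    using sub_R[OF r r'] by simp
  also have "\<dots> \<longleftrightarrow> J1 +>\<^bsub>R1\<^esub> fst r = J1 +>\<^bsub>R1\<^esub> fst r' \<and> J2 +>\<^bsub>R2\<^esub> snd r = J2 +>\<^bsub>R2\<^esub> snd r'"
    using D1.ideal_rcos_eq[OF J1_ideal fc(1,2)] D2.ideal_rcos_eq[OF J2_ideal fc(3,4)] by simp
  also have "\<dots> \<longleftrightarrow> phi r = phi r'" unfolding phi_def by simp
  finally show ?thesis .
qed

lemma fiso_eq:
  assumes r: "r \<in> carrier R"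
  shows "fiso (r \<odot>\<^bsub>M\<^esub> xg) = phi r"
proof -
  define r0 where "r0 = (SOME s. s \<in> carrier R \<and> r \<odot>\<^bsub>M\<^esub> xg = s \<odot>\<^bsub>M\<^esub> xg)"
  have "r0 \<in> carrier R \<and> r \<odot>\<^bsub>M\<^esub> xg = r0 \<odot>\<^bsub>M\<^esub> xg"
    unfolding r0_def by (rule someI[of _ r]) (simp add: r)
  hence "phi r0 = phi r" using heq[OF _ r, of r0] by auto
  thus ?thesis unfolding fiso_def r0_def[symmetric] .
qed

lemma phi_add:
  assumes r: "r \<in> carrier R" and r': "r' \<in> carrier R"
  shows "phi (r \<oplus>\<^bsub>R\<^esub> r') = phi r \<oplus>\<^bsub>C\<^esub> phi r'"
proof -
  interpret I1: ideal J1 R1 by (rule J1_ideal)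
  interpret I2: ideal J2 R2 by (rule J2_ideal)
  have fc: "fst r \<in> carrier R1" "fst r' \<in> carrier R1" "snd r \<in> carrier R2" "snd r' \<in> carrier R2"
    using r r' fst_mult_carrier snd_mult_carrier by auto
  show ?thesis unfolding C_add phi_def
    using I1.a_rcos_sum[OF fc(1,2)] I2.a_rcos_sum[OF fc(3,4)] by simp
qed

lemma phi_mult:
  assumes s: "s \<in> carrier R" and r: "r \<in> carrier R"
  shows "phi (s \<otimes>\<^bsub>R\<^esub> r) = s \<odot>\<^bsub>C\<^esub> phi r"
proof -
  interpret I1: ideal J1 R1 by (rule J1_ideal)
  interpret I2: ideal J2 R2 by (rule J2_ideal)
  have fc: "fst s \<in> carrier R1" "fst r \<in> carrier R1" "snd s \<in> carrier R2" "snd r \<in> carrier R2"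
    using s r fst_mult_carrier snd_mult_carrier by auto
  show ?thesis unfolding C_smult phi_def
    using I1.rcoset_mult_add[OF fc(1,2)] I2.rcoset_mult_add[OF fc(3,4)] by simp
qed

lemma iso: "mod_iso R M C"
  unfolding mod_iso_def
proof (intro exI[of _ fiso] conjI ballI)
  show "bij_betw fiso (carrier M) (carrier C)"
    unfolding bij_betw_def
  proof
    show "inj_on fiso (carrier M)"
    proof
      fix y y' assume y: "y \<in> carrier M" and y': "y' \<in> carrier M" and e: "fiso y = fiso y'"
      obtain r where r: "r \<in> carrier R" "y = r \<odot>\<^bsub>M\<^esub> xg" using xgcyc[OF y] by blast
      obtain r' where r': "r' \<in> carrier R" "y' = r' \<odot>\<^bsub>M\<^esub> xg" using xgcyc[OF y'] by blast
      have "phi r = phi r'" using e fiso_eq[OF r(1)] fiso_eq[OF r'(1)] r(2) r'(2) by simp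
      thus "y = y'" using heq[OF r(1) r'(1)] r(2) r'(2) by simp
    qed
    show "fiso ` carrier M = carrier C"
    proof
      show "fiso ` carrier M \<subseteq> carrier C"
      proof
        fix z assume "z \<in> fiso ` carrier M"
        then obtain y where y: "y \<in> carrier M" "z = fiso y" by auto
        obtain r where r: "r \<in> carrier R" "y = r \<odot>\<^bsub>M\<^esub> xg" using xgcyc[OF y(1)] by blast
        have "z = phi r" using y(2) r fiso_eq by simp
        thus "z \<in> carrier C" unfolding C_carrier using r(1) by blast
      qed
      show "carrier C \<subseteq> fiso ` carrier M"
      proof
        fix z assume "z \<in> carrier C"
        then obtain r where r: "r \<in> carrier R" "z = phi r" unfolding C_carrier by blast
        have "z = fiso (r \<odot>\<^bsub>M\<^esub> xg)" using fiso_eq[OF r(1)] r(2) by simp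
        moreover have "r \<odot>\<^bsub>M\<^esub> xg \<in> carrier M" using r(1) xgc by (rule MM.smult_closed)
        ultimately show "z \<in> fiso ` carrier M" by blast
      qed
    qed
  qed
next
  fix y y' assume y: "y \<in> carrier M" and y': "y' \<in> carrier M"
  obtain r where r: "r \<in> carrier R" "y = r \<odot>\<^bsub>M\<^esub> xg" using xgcyc[OF y] by blast
  obtain r' where r': "r' \<in> carrier R" "y' = r' \<odot>\<^bsub>M\<^esub> xg" using xgcyc[OF y'] by blast
  have "y \<oplus>\<^bsub>M\<^esub> y' = (r \<oplus>\<^bsub>R\<^esub> r') \<odot>\<^bsub>M\<^esub> xg"
    using MM.smult_l_distr[OF r(1) r'(1) xgc] r(2) r'(2) by simp
  hence "fiso (y \<oplus>\<^bsub>M\<^esub> y') = phi (r \<oplus>\<^bsub>R\<^esub> r')"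
    using fiso_eq[OF MM.R.a_closed[OF r(1) r'(1)]] by simp
  also have "\<dots> = phi r \<oplus>\<^bsub>C\<^esub> phi r'" using phi_add[OF r(1) r'(1)] .
  also have "\<dots> = fiso y \<oplus>\<^bsub>C\<^esub> fiso y'" using fiso_eq r r' by simp
  finally show "fiso (y \<oplus>\<^bsub>M\<^esub> y') = fiso y \<oplus>\<^bsub>C\<^esub> fiso y'" .
next
  fix s y assume s: "s \<in> carrier R" and y: "y \<in> carrier M"
  obtain r where r: "r \<in> carrier R" "y = r \<odot>\<^bsub>M\<^esub> xg" using xgcyc[OF y] by blast
  have "s \<odot>\<^bsub>M\<^esub> y = (s \<otimes>\<^bsub>R\<^esub> r) \<odot>\<^bsub>M\<^esub> xg"
    using MM.smult_assoc1[OF s r(1) xgc] r(2) by simp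
  hence "fiso (s \<odot>\<^bsub>M\<^esub> y) = phi (s \<otimes>\<^bsub>R\<^esub> r)"
    using fiso_eq[OF MM.R.m_closed[OF s r(1)]] by simp
  also have "\<dots> = s \<odot>\<^bsub>C\<^esub> phi r" using phi_mult[OF s r(1)] .
  also have "\<dots> = s \<odot>\<^bsub>C\<^esub> fiso y" using fiso_eq r by simp
  finally show "fiso (s \<odot>\<^bsub>M\<^esub> y) = s \<odot>\<^bsub>C\<^esub> fiso y" .
qed

lemma main:
  "mod_iso R M (pb_module R1 R2 V1 V2 {\<zero>\<^bsub>R1\<^esub>} {\<zero>\<^bsub>R2\<^esub>})
   \<or> (\<exists>(n::nat) (m::nat). n \<ge> 1 \<and> m \<ge> 1 \<and> mod_iso R M
       (pb_module R1 R2 V1 V2 (PIdl\<^bsub>R1\<^esub> (p1 [^]\<^bsub>R1\<^esub> n)) (PIdl\<^bsub>R2\<^esub> (p2 [^]\<^bsub>R2\<^esub> m))))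
   \<or> (\<exists>m::nat. m \<ge> 1 \<and> mod_iso R M
       (pb_module R1 R2 V1 V2 {\<zero>\<^bsub>R1\<^esub>} (PIdl\<^bsub>R2\<^esub> (p2 [^]\<^bsub>R2\<^esub> m))))
   \<or> (\<exists>n::nat. n \<ge> 1 \<and> mod_iso R M
       (pb_module R1 R2 V1 V2 (PIdl\<^bsub>R1\<^esub> (p1 [^]\<^bsub>R1\<^esub> n)) {\<zero>\<^bsub>R2\<^esub>}))"
  using J1_class J2_class iso by metis

end

theorem theorem3p4:
  fixes R1 :: "'a ring" and R2 :: "'b ring" and Rbar :: "'c ring"
    and V1 :: "'a \<Rightarrow> 'c" and V2 :: "'b \<Rightarrow> 'c"
    and p1 :: 'a and p2 :: 'b
    and M :: "('a \<times> 'b, 'm) module"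
  assumes dvr1: "dvr R1" and dvr2: "dvr R2"
    and p1: "p1 \<in> carrier R1" "maximalideal (PIdl\<^bsub>R1\<^esub> p1) R1"
    and p2: "p2 \<in> carrier R2" "maximalideal (PIdl\<^bsub>R2\<^esub> p2) R2"
    and fld: "field Rbar"
    and V1: "V1 \<in> ring_hom R1 Rbar" "V1 ` carrier R1 = carrier Rbar"
            "a_kernel R1 Rbar V1 = PIdl\<^bsub>R1\<^esub> p1"
    and V2: "V2 \<in> ring_hom R2 Rbar" "V2 ` carrier R2 = carrier Rbar"
            "a_kernel R2 Rbar V2 = PIdl\<^bsub>R2\<^esub> p2"
    and modM: "module (pb_ring R1 R2 V1 V2) M"
    and nonzero: "carrier M \<noteq> {\<zero>\<^bsub>M\<^esub>}"
    and indec: "indecomposable (pb_ring R1 R2 V1 V2) M"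
    and sep: "separated R1 R2 (PIdl\<^bsub>R1\<^esub> p1) (PIdl\<^bsub>R2\<^esub> p2) (pb_ring R1 R2 V1 V2) M"
    and papm: "pap_multiplication_module (pb_ring R1 R2 V1 V2) M"
  shows "mod_iso (pb_ring R1 R2 V1 V2) M
           (pb_module R1 R2 V1 V2 {\<zero>\<^bsub>R1\<^esub>} {\<zero>\<^bsub>R2\<^esub>})
       \<or> (\<exists>(n::nat) (m::nat). n \<ge> 1 \<and> m \<ge> 1 \<and> mod_iso (pb_ring R1 R2 V1 V2) M
           (pb_module R1 R2 V1 V2 (PIdl\<^bsub>R1\<^esub> (p1 [^]\<^bsub>R1\<^esub> n)) (PIdl\<^bsub>R2\<^esub> (p2 [^]\<^bsub>R2\<^esub> m))))
       \<or> (\<exists>m::nat. m \<ge> 1 \<and> mod_iso (pb_ring R1 R2 V1 V2) M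
           (pb_module R1 R2 V1 V2 {\<zero>\<^bsub>R1\<^esub>} (PIdl\<^bsub>R2\<^esub> (p2 [^]\<^bsub>R2\<^esub> m))))
       \<or> (\<exists>n::nat. n \<ge> 1 \<and> mod_iso (pb_ring R1 R2 V1 V2) M
           (pb_module R1 R2 V1 V2 (PIdl\<^bsub>R1\<^esub> (p1 [^]\<^bsub>R1\<^esub> n)) {\<zero>\<^bsub>R2\<^esub>}))"
  using pbs.main[OF pbs.intro[OF assms]] .

end
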